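(* Let $\Delta\subset{\mathbb RP}^2$ be the interior of a triangle with its Hilbert metric $d_\Delta(b,c)=|\log cr(a,b,c,d)|$, and let $T$ be an ideal triangle in $\Delta$ with shape parameter $t>0$. Then the Hilbert area of $T$ is $$B(t)=\int_1^\infty\frac1s\log\left(\frac{(st+1)(s+t)}{t(s-1)^2}\right)ds.$$
   Context: Hilbert metric on a properly convex open set $\Omega$: for $b,c\in\Omega$ let the projective line through them meet $\partial\Omega$ at $a,d$ with $a,b,c,d$ in order; $d_\Omega(b,c)=|\log cr(a,b,c,d)|$ with $cr(y_1,y_2,y_3,y_4)=\frac{(y_1-y_3)(y_2-y_4)}{(y_1-y_2)(y_3-y_4)}$. Hilbert area is the p-area of this Finsler metric: on each tangent space it is the multiple of Lebesgue measure for which the supremum of areas of parallelograms spanned by two vectors of norm $\le1$ is $1$. Write $\Delta=\{[x_0v_0+x_1v_1+x_2v_2]:x_i>0\}$. An ideal triangle in $\Delta$ is the intersection with $\Delta$ of a triangle whose vertices lie in the interiors of the three sides of $\overline\Delta$, one on each side; its vertices can be written $[v_0+av_1],[v_1+bv_2],[v_2+cv_0]$ with $a,b,c>0$, and its shape parameter is $t=abc$ (depending only on the cyclic ordering of vertices; reversing it replaces $t$ by $1/t$). *)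

theory Defs
  imports "HOL-Analysis.Analysis"
begin

text \<open>We work in an affine chart of RP^2 identified with real \<times> real, chosen so
that it contains the closure of the triangle.  A point [x0 v0 + x1 v1 + x2 v2]
with v_i = (P_i, 1) corresponds to the chart point
(x0 P0 + x1 P1 + x2 P2)/(x0+x1+x2).\<close>

definition cr :: "real \<Rightarrow> real \<Rightarrow> real \<Rightarrow> real \<Rightarrow> real" where
  "cr y1 y2 y3 y4 = ((y1 - y3) * (y2 - y4)) / ((y1 - y2) * (y3 - y4))"

text \<open>For b \<noteq> c the line through b and c is parametrised
by s \<mapsto> b + s (c - b); it leaves Omega at parameter s_plus > 1 (point d) and at
parameter -s_minus < 0 (point a), so a, b, c, d have parameters
-s_minus, 0, 1, s_plus (cross-ratio is invariant under affine reparametrisation).\<close>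

definition hilbert_dist :: "(real \<times> real) set \<Rightarrow> real \<times> real \<Rightarrow> real \<times> real \<Rightarrow> real" where
  "hilbert_dist \<Omega> b c =
     (if b = c then 0 else
      (let sp = Sup {s. s \<ge> 0 \<and> b + s *\<^sub>R (c - b) \<in> \<Omega>};
           sm = Sup {s. s \<ge> 0 \<and> b - s *\<^sub>R (c - b) \<in> \<Omega>}
       in \<bar>ln (cr (- sm) 0 1 sp)\<bar>))"

definition hilbert_norm :: "(real \<times> real) set \<Rightarrow> real \<times> real \<Rightarrow> real \<times> real \<Rightarrow> real" where
  "hilbert_norm \<Omega> p v = Lim (at_right 0) (\<lambda>h. hilbert_dist \<Omega> p (p + h *\<^sub>R v) / h)"

text \<open>p-area density: the multiple of Lebesgue measure for which the supremum of
the areas of parallelograms spanned by two vectors of norm \<le> 1 equals 1.\<close>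

definition hilbert_area_density :: "(real \<times> real) set \<Rightarrow> real \<times> real \<Rightarrow> real" where
  "hilbert_area_density \<Omega> p =
     1 / (SUP uw \<in> {(u, w). hilbert_norm \<Omega> p u \<le> 1 \<and> hilbert_norm \<Omega> p w \<le> 1}.
            \<bar>fst (fst uw) * snd (snd uw) - snd (fst uw) * fst (snd uw)\<bar>)"

definition open_tri :: "real \<times> real \<Rightarrow> real \<times> real \<Rightarrow> real \<times> real \<Rightarrow> (real \<times> real) set" where
  "open_tri P0 P1 P2 = {x0 *\<^sub>R P0 + x1 *\<^sub>R P1 + x2 *\<^sub>R P2 | x0 x1 x2.
      x0 > 0 \<and> x1 > 0 \<and> x2 > 0 \<and> x0 + x1 + x2 = 1}"

text \<open>Ideal triangle with vertices [v0 + a v1], [v1 + b v2], [v2 + c v0].\<close>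

definition ideal_tri :: "real \<times> real \<Rightarrow> real \<times> real \<Rightarrow> real \<times> real \<Rightarrow> real \<Rightarrow> real \<Rightarrow> real
    \<Rightarrow> (real \<times> real) set" where
  "ideal_tri P0 P1 P2 a b c =
     open_tri P0 P1 P2 \<inter>
     convex hull {(1 / (1 + a)) *\<^sub>R (P0 + a *\<^sub>R P1),
                  (1 / (1 + b)) *\<^sub>R (P1 + b *\<^sub>R P2),
                  (1 / (1 + c)) *\<^sub>R (P2 + c *\<^sub>R P0)}"

definition B_integrand :: "real \<Rightarrow> real \<Rightarrow> real" where
  "B_integrand t s = (1 / s) * ln (((s * t + 1) * (s + t)) / (t * (s - 1)^2))"

definition B :: "real \<Rightarrow> real" where
  "B t = integral {1<..} (B_integrand t)"

end

theory Submission
  imports Defs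
begin


lemma SUP_indicator_ennreal:
  fixes A :: "nat \<Rightarrow> real set" and h :: "real \<Rightarrow> real"
  assumes inc: "incseq A" and U: "(\<Union>n. A n) = S" and nn: "\<And>x. x \<in> S \<Longrightarrow> h x \<ge> 0"
  shows "(SUP n. ennreal (h x * indicator (A n) x)) = ennreal (h x * indicator S x)"
proof (cases "x \<in> S")
  case True
  then obtain n where n: "x \<in> A n" using U by blast
  have "(SUP m. ennreal (h x * indicator (A m) x)) = ennreal (h x)"
  proof (rule antisym)
    show "(SUP m. ennreal (h x * indicator (A m) x)) \<le> ennreal (h x)"
      by (rule SUP_least) (auto simp: indicator_def intro: ennreal_leI)
    show "ennreal (h x) \<le> (SUP m. ennreal (h x * indicator (A m) x))"
      using n by (intro SUP_upper2[of n]) (auto simp: indicator_def)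
  qed
  then show ?thesis using True by (simp add: indicator_def)
next
  case False
  then have "\<And>m. x \<notin> A m" using U by blast
  then show ?thesis using False by (simp add: indicator_def)
qed

lemma incseq_indicator_ennreal:
  fixes A :: "nat \<Rightarrow> real set" and h :: "real \<Rightarrow> real"
  assumes inc: "incseq A" and U: "(\<Union>n. A n) = S" and nn: "\<And>x. x \<in> S \<Longrightarrow> h x \<ge> 0"
  shows "incseq (\<lambda>n x. ennreal (h x * indicator (A n) x))"
proof (rule incseq_SucI, rule le_funI)
  fix n x
  show "ennreal (h x * indicator (A n) x) \<le> ennreal (h x * indicator (A (Suc n)) x)"
  proof (cases "x \<in> A n")
    case True
    then have "x \<in> A (Suc n)" using inc by (auto simp: incseq_Suc_iff)
    then show ?thesis using True by (simp add: indicator_def)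
  next
    case False
    then show ?thesis by (simp add: indicator_def)
  qed
qed

lemma frac_mono_iff:
  fixes k x y :: real
  assumes "k > 0" "x > -k" "y > -k"
  shows "x/(x+k) \<le> y/(y+k) \<longleftrightarrow> x \<le> y"
proof -
  have "x/(x+k) \<le> y/(y+k) \<longleftrightarrow> x*(y+k) \<le> y*(x+k)"
    using assms by (simp add: divide_simps)
  also have "\<dots> \<longleftrightarrow> k*x \<le> k*y" by (simp add: algebra_simps)
  also have "\<dots> \<longleftrightarrow> x \<le> y" using assms by simp
  finally show ?thesis .
qed

lemma subst_frac:
  fixes k \<alpha> :: real and f :: "real \<Rightarrow> real"
  assumes k: "k > 0" and \<alpha>: "\<alpha> \<ge> 0" and fm[measurable]: "f \<in> borel_measurable borel"
    and fnn: "\<And>w. \<alpha>/(\<alpha>+k) < w \<Longrightarrow> w < 1 \<Longrightarrow> f w \<ge> 0"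
  shows "(\<integral>\<^sup>+w. ennreal (f w * indicator {\<alpha>/(\<alpha>+k)<..<1} w) \<partial>lborel)
       = (\<integral>\<^sup>+s. ennreal (f (s/(s+k)) * (k/(s+k)^2) * indicator {\<alpha><..} s) \<partial>lborel)"
proof -
  define g where "g s = s/(s+k)" for s
  define g' where "g' s = k/(s+k)^2" for s
  define A where "A n = {\<alpha> + 1/(real n+1) .. \<alpha> + real n + 1}" for n :: nat
  define Bs where "Bs n = {g (\<alpha> + 1/(real n+1)) .. g (\<alpha> + real n + 1)}" for n :: nat
  have gmono: "g x \<le> g y \<longleftrightarrow> x \<le> y" if "x > -k" "y > -k" for x y
    using frac_mono_iff[OF k that] by (simp add: g_def)
  have gless1: "g x < 1" if "x > -k" for x
    using that k by (simp add: g_def)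
  have ginv: "g (k*x/(1-x)) = x" if "x < 1" for x
    using that k by (simp add: g_def field_simps)
  have incA: "incseq A"
  proof (rule incseq_SucI)
    fix n
    have "1/(real (Suc n)+1) \<le> 1/(real n+1)" by (simp add: divide_simps)
    then show "A n \<subseteq> A (Suc n)" by (auto simp: A_def)
  qed
  have UA: "(\<Union>n. A n) = {\<alpha><..}"
  proof
    show "(\<Union>n. A n) \<subseteq> {\<alpha><..}"
    proof
      fix x assume "x \<in> (\<Union>n. A n)"
      then obtain n where "x \<in> A n" by blast
      moreover have "1/(real n+1) > 0" by simp
      ultimately have "\<alpha> < x" unfolding A_def by (smt (verit) atLeastAtMost_iff)
      then show "x \<in> {\<alpha><..}" by simp
    qed
    show "{\<alpha><..} \<subseteq> (\<Union>n. A n)"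
    proof
      fix x assume "x \<in> {\<alpha><..}"
      then have x: "x - \<alpha> > 0" by simp
      obtain n1 :: nat where n1: "n1 > 0" "inverse (real n1) < x - \<alpha>"
        using ex_inverse_of_nat_less[OF x] by blast
      obtain n2 :: nat where n2: "x < real n2" using reals_Archimedean2 by blast
      define n where "n = max n1 n2"
      have "1/(real n + 1) \<le> inverse (real n1)"
        using n1 by (simp add: n_def divide_simps)
      moreover have "real n2 \<le> real n" by (simp add: n_def)
      ultimately have "x \<in> A n" using n1 n2 \<alpha> by (auto simp: A_def)
      then show "x \<in> (\<Union>n. A n)" by blast
    qed
  qed
  have incB: "incseq Bs"
  proof (rule incseq_SucI)
    fix n
    have "1/(real (Suc n)+1) \<le> 1/(real n+1)" by (simp add: divide_simps)
    then have h1: "\<alpha> + 1/(real (Suc n)+1) \<le> \<alpha> + 1/(real n+1)" by simp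
    have h2: "\<alpha> + real n + 1 \<le> \<alpha> + real (Suc n) + 1" by simp
    have p1: "\<alpha> + 1/(real m+1) > -k" for m :: nat
      using \<alpha> k by (smt (verit) divide_pos_pos of_nat_0_le_iff)
    have p2: "\<alpha> + real m + 1 > -k" for m :: nat using \<alpha> k by simp
    have "g (\<alpha> + 1/(real (Suc n)+1)) \<le> g (\<alpha> + 1/(real n+1))"
      using gmono[OF p1 p1] h1 by blast
    moreover have "g (\<alpha> + real n + 1) \<le> g (\<alpha> + real (Suc n) + 1)"
      using gmono[OF p2 p2] h2 by blast
    ultimately show "Bs n \<subseteq> Bs (Suc n)"
      unfolding Bs_def by (meson atLeastatMost_subset_iff order_trans)
  qed
  have UB: "(\<Union>n. Bs n) = {\<alpha>/(\<alpha>+k)<..<1}"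
  proof
    show "(\<Union>n. Bs n) \<subseteq> {\<alpha>/(\<alpha>+k)<..<1}"
    proof
      fix x assume "x \<in> (\<Union>n. Bs n)"
      then obtain n where xn: "x \<in> Bs n" by blast
      have p1: "\<alpha> + 1/(real n+1) > \<alpha>" by simp
      have "g \<alpha> < g (\<alpha> + 1/(real n+1))"
        using gmono[of "\<alpha> + 1/(real n+1)" \<alpha>] p1 \<alpha> k by (smt (verit))
      moreover have "g (\<alpha> + real n + 1) < 1" using gless1 \<alpha> k by simp
      ultimately show "x \<in> {\<alpha>/(\<alpha>+k)<..<1}" using xn by (auto simp: Bs_def g_def)
    qed
    show "{\<alpha>/(\<alpha>+k)<..<1} \<subseteq> (\<Union>n. Bs n)"
    proof
      fix x assume x: "x \<in> {\<alpha>/(\<alpha>+k)<..<1}"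
      define s where "s = k*x/(1-x)"
      have gs: "g s = x" using x ginv by (simp add: s_def)
      have "x > 0" using x \<alpha> k by (smt (verit) greaterThanLessThan_iff divide_nonneg_pos)
      then have spos: "s > 0" using x k by (simp add: s_def)
      have "g \<alpha> < g s" using x gs by (simp add: g_def)
      then have "\<alpha> < s" using gmono[of s \<alpha>] spos \<alpha> k by (smt (verit))
      then obtain n where sn: "s \<in> A n" using UA by blast
      then have "g (\<alpha> + 1/(real n+1)) \<le> g s" "g s \<le> g (\<alpha> + real n + 1)"
        using gmono spos \<alpha> k by (auto simp: A_def) (smt (verit) divide_pos_pos of_nat_0_le_iff)+
      then show "x \<in> (\<Union>n. Bs n)" using gs by (auto simp: Bs_def)
    qed
  qed
  have nnB: "f x \<ge> 0" if "x \<in> {\<alpha>/(\<alpha>+k)<..<1}" for x using fnn that by auto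
  have nnA: "f (g s) * g' s \<ge> 0" if "s \<in> {\<alpha><..}" for s
  proof -
    have "g \<alpha> < g s" using gmono[of s \<alpha>] that \<alpha> k by (smt (verit) greaterThan_iff)
    moreover have "g s < 1" using gless1 that \<alpha> k by simp
    ultimately have "f (g s) \<ge> 0" using fnn by (simp add: g_def)
    then show ?thesis by (simp add: g'_def k less_imp_le)
  qed
  have deriv: "(g has_real_derivative g' x) (at x)" if "x > -k" for x
  proof -
    have "x + k \<noteq> 0" using that by simp
    then show ?thesis unfolding g_def g'_def
      by (auto intro!: derivative_eq_intros simp: power2_eq_square field_simps)
  qed
  have step: "(\<integral>\<^sup>+x. ennreal (f x * indicator (Bs n) x) \<partial>lborel)
            = (\<integral>\<^sup>+x. ennreal (f (g x) * g' x * indicator (A n) x) \<partial>lborel)" for n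
  proof -
    have p1: "\<alpha> + 1/(real n+1) > -k"
      using \<alpha> k by (smt (verit) divide_pos_pos of_nat_0_le_iff)
    have le: "\<alpha> + 1/(real n+1) \<le> \<alpha> + real n + 1"
      by (smt (verit) divide_le_eq_1 of_nat_0_le_iff)
    show ?thesis unfolding Bs_def A_def
    proof (rule nn_integral_substitution)
      show "set_borel_measurable borel {g (\<alpha> + 1 / (real n + 1))..g (\<alpha> + real n + 1)} f"
        unfolding set_borel_measurable_def by measurable
      show "(g has_real_derivative g' x) (at x)" if "x \<in> {\<alpha> + 1 / (real n + 1)..\<alpha> + real n + 1}" for x
        using that p1 by (intro deriv) auto
      show "continuous_on {\<alpha> + 1 / (real n + 1)..\<alpha> + real n + 1} g'"
        unfolding g'_def using p1 by (intro continuous_intros) auto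
      show "0 \<le> g' x" for x using k by (simp add: g'_def)
    qed (rule le)
  qed
  have "(\<integral>\<^sup>+w. ennreal (f w * indicator {\<alpha>/(\<alpha>+k)<..<1} w) \<partial>lborel)
      = (\<integral>\<^sup>+w. (SUP n. ennreal (f w * indicator (Bs n) w)) \<partial>lborel)"
    by (rule nn_integral_cong, rule SUP_indicator_ennreal[OF incB UB nnB, symmetric])
  also have "\<dots> = (SUP n. \<integral>\<^sup>+w. ennreal (f w * indicator (Bs n) w) \<partial>lborel)"
    by (rule nn_integral_monotone_convergence_SUP[OF incseq_indicator_ennreal[OF incB UB nnB]]) (unfold Bs_def, measurable)
  also have "\<dots> = (SUP n. \<integral>\<^sup>+s. ennreal (f (g s) * g' s * indicator (A n) s) \<partial>lborel)"
    using step by simp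
  also have "\<dots> = (\<integral>\<^sup>+s. (SUP n. ennreal (f (g s) * g' s * indicator (A n) s)) \<partial>lborel)"
    by (rule nn_integral_monotone_convergence_SUP[OF incseq_indicator_ennreal[OF incA UA nnA], symmetric])
       (unfold A_def g_def g'_def, measurable)
  also have "\<dots> = (\<integral>\<^sup>+s. ennreal (f (g s) * g' s * indicator {\<alpha><..} s) \<partial>lborel)"
    by (rule nn_integral_cong, rule SUP_indicator_ennreal[OF incA UA nnA])
  finally show ?thesis by (simp add: g_def g'_def)
qed



definition qR :: "real \<Rightarrow> real \<Rightarrow> real \<Rightarrow> real" where
  "qR a c w = (w + a*c*(1-w))/a"
definition qL :: "real \<Rightarrow> real \<Rightarrow> real \<Rightarrow> real \<Rightarrow> real" where
  "qL a b c w = max (c*(1-w) - b*c*w) ((b*w - (1-w))/(a*b))"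
definition G :: "real \<Rightarrow> real \<Rightarrow> real \<Rightarrow> real \<Rightarrow> real" where
  "G a b c w = 1/(w*(1-w)) * ln (qR a c w / qL a b c w)"

lemma qL_pos:
  assumes "a > 0" "b > 0" "c > 0" "0 < w" "w < 1" "w \<noteq> 1/(1+b)"
  shows "qL a b c w > 0"
proof (cases "w*(1+b) < 1")
  case True
  then have "c*(1-w) - b*c*w = c*(1 - w*(1+b))" by (simp add: algebra_simps)
  also have "\<dots> > 0" using True assms by simp
  finally show ?thesis unfolding qL_def by simp
next
  case False
  have "w*(1+b) \<noteq> 1" using assms by (auto simp: field_simps)
  then have "b*w - (1-w) > 0" using False by (simp add: algebra_simps)
  then have "(b*w - (1-w))/(a*b) > 0" using assms by simp
  then show ?thesis unfolding qL_def by simp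
qed

lemma qL_le_qR:
  assumes "a > 0" "b > 0" "c > 0" "0 < w" "w < 1"
  shows "qL a b c w \<le> qR a c w"
proof -
  have "c*(1-w) - b*c*w \<le> (w + a*c*(1-w))/a"
  proof -
    have "a*(c*(1-w) - b*c*w) \<le> w + a*c*(1-w)"
      using assms by (simp add: algebra_simps)
    then show ?thesis using assms by (simp add: field_simps)
  qed
  moreover have "(b*w - (1-w))/(a*b) \<le> (w + a*c*(1-w))/a"
  proof -
    have "(1-w)*(1+a*b*c) \<ge> 0" using assms by (intro mult_nonneg_nonneg) auto
    then have "b*w - (1-w) \<le> b*(w + a*c*(1-w))"
      by (simp add: algebra_simps)
    then have "(b*w - (1-w))/(a*b) \<le> b*(w + a*c*(1-w))/(a*b)"
      using assms by (intro divide_right_mono) auto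
    also have "\<dots> = (w + a*c*(1-w))/a" using assms by simp
    finally show ?thesis .
  qed
  ultimately show ?thesis unfolding qL_def qR_def by simp
qed

lemma qR_pos:
  assumes "a > 0" "c > 0" "0 < w" "w < 1"
  shows "qR a c w > 0"
  using assms unfolding qR_def by (simp add: add_pos_pos)

lemma G_nonneg:
  assumes "a > 0" "b > 0" "c > 0" "0 < w" "w < 1" "w \<noteq> 1/(1+b)"
  shows "G a b c w \<ge> 0"
proof -
  have "qR a c w / qL a b c w \<ge> 1"
    using qL_pos[OF assms] qL_le_qR[OF assms(1-5)] by simp
  then show ?thesis unfolding G_def using assms by simp
qed

lemma aux_frac: "Y \<noteq> 0 \<Longrightarrow> X \<noteq> 0 \<Longrightarrow> 1/(X/Y^2) * (b/Y^2) = b/(X::real)"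
  by (simp add: field_simps)

lemma G_right:
  assumes a: "a > 0" and b: "b > 0" and c: "c > 0" and s: "s > 1"
  shows "G a b c (s/(s+b)) * (b/(s+b)^2) = (1/s) * ln ((s + a*b*c)/(s-1))"
proof -
  define w where "w = s/(s+b)"
  have sb: "s + b > 0" using s b by simp
  have sbne: "s + b \<noteq> 0" "b + s \<noteq> 0" using sb by auto
  have w1: "1 - w = b/(s+b)" using sb by (simp add: w_def field_simps)
  have "c*(1-w) - b*c*w = c*b/(s+b) - b*c* s/(s+b)" using sbne unfolding w1 w_def by (simp add: field_simps)
  also have "\<dots> = b*c*(1-s)/(s+b)" by (simp add: diff_divide_distrib[symmetric] algebra_simps)
  finally have e1: "c*(1-w) - b*c*w = b*c*(1-s)/(s+b)" .
  have "b*w - (1-w) = b* s/(s+b) - b/(s+b)" using sbne unfolding w1 w_def by (simp add: field_simps)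
  also have "\<dots> = b*(s-1)/(s+b)" by (simp add: diff_divide_distrib[symmetric] algebra_simps)
  finally have e2: "(b*w - (1-w))/(a*b) = (s-1)/(a*(s+b))" using sb a b by simp
  have "b*c*(1-s)/(s+b) \<le> 0" using s b c sb by (intro divide_nonpos_pos mult_nonneg_nonpos) auto
  moreover have "(s-1)/(a*(s+b)) \<ge> 0" using s a sb by simp
  ultimately have qL: "qL a b c w = (s-1)/(a*(s+b))" unfolding qL_def e1 e2 by simp
  have "w + a*c*(1-w) = s/(s+b) + a*c*(b/(s+b))" by (simp only: w1) (simp add: w_def)
  also have "\<dots> = (s + a*b*c)/(s+b)" by (simp add: add_divide_distrib algebra_simps)
  finally have "w + a*c*(1-w) = (s + a*b*c)/(s+b)" .
  then have qR: "qR a c w = (s + a*b*c)/(a*(s+b))"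
    unfolding qR_def using sb a by simp
  have r: "qR a c w / qL a b c w = (s + a*b*c)/(s-1)"
  proof -
    have "s - 1 > 0" using s by simp
    then have "(s + a*b*c)/(a*(s+b)) / ((s-1)/(a*(s+b))) = (s + a*b*c)/(s-1)"
      using sb a by (simp add: divide_simps)
    then show ?thesis unfolding qL qR .
  qed
  have ww: "w*(1-w) = b* s/(s+b)^2" unfolding w1 using sbne by (simp add: w_def power2_eq_square)
  have f: "1/(w*(1-w)) * (b/(s+b)^2) = 1/s"
    unfolding ww using sbne b s by (subst aux_frac) auto
  have "G a b c w * (b/(s+b)^2) = (1/(w*(1-w)) * (b/(s+b)^2)) * ln (qR a c w / qL a b c w)"
    unfolding G_def by simp
  also have "\<dots> = (1/s) * ln ((s + a*b*c)/(s-1))" unfolding f r ..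
  finally show ?thesis by (simp add: w_def)
qed

lemma G_left:
  assumes a: "a > 0" and b: "b > 0" and c: "c > 0" and s: "s > 1"
  shows "G a b c (1 - s/(s+1/b)) * ((1/b)/(s+1/b)^2) = (1/s) * ln ((1 + a*b*c* s)/(a*b*c*(s-1)))"
proof -
  define w where "w = 1 - s/(s+1/b)"
  have sb: "b* s + 1 > 0" using s b by (simp add: add_pos_pos)
  have sb': "s + 1/b = (b* s+1)/b" using b by (simp add: field_simps)
  have w0: "w = 1/(b* s+1)" using sb b by (simp add: w_def sb' field_simps)
  have w1: "1 - w = b* s/(b* s+1)" using sb by (simp add: w0 field_simps)
  have "c*(1-w) - b*c*w = c*(b* s)/(b* s+1) - b*c/(b* s+1)" using sb unfolding w1 w0 by (simp add: field_simps)
  also have "\<dots> = b*c*(s-1)/(b* s+1)" by (simp add: diff_divide_distrib[symmetric] algebra_simps)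
  finally have e1: "c*(1-w) - b*c*w = b*c*(s-1)/(b* s+1)" .
  have "b*w - (1-w) = b/(b* s+1) - b* s/(b* s+1)" using sb unfolding w1 w0 by (simp add: field_simps)
  also have "\<dots> = b*(1-s)/(b* s+1)" by (simp add: diff_divide_distrib[symmetric] algebra_simps)
  finally have e2: "(b*w - (1-w))/(a*b) = (1-s)/(a*(b* s+1))" using sb a b by simp
  have "(1-s)/(a*(b* s+1)) \<le> 0" using s a sb by (simp add: divide_nonpos_pos)
  moreover have "b*c*(s-1)/(b* s+1) \<ge> 0" using s b c sb by simp
  ultimately have qL: "qL a b c w = b*c*(s-1)/(b* s+1)" unfolding qL_def e1 e2 by simp
  have qR: "qR a c w = (1 + a*b*c* s)/(a*(b* s+1))"
    unfolding qR_def w1 using sb a by (simp add: w0 field_simps)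
  have r: "qR a c w / qL a b c w = (1 + a*b*c* s)/(a*b*c*(s-1))"
    proof -
    have "s - 1 > 0" using s by simp
    then have "(1 + a*b*c* s)/(a*(b* s+1)) / (b*c*(s-1)/(b* s+1)) = (1 + a*b*c* s)/(a*b*c*(s-1))"
      using sb a b c by (simp add: divide_simps)
    then show ?thesis unfolding qL qR .
  qed
  have g': "(1/b)/(s+1/b)^2 = b/(b* s+1)^2" using b sb unfolding sb' by (simp add: power2_eq_square field_simps)
  have ww: "w*(1-w) = b* s/(b* s+1)^2" using sb unfolding w0 by (simp add: field_simps power2_eq_square)
  have bs: "b* s > 0" using b s by simp
  have f: "1/(w*(1-w)) * ((1/b)/(s+1/b)^2) = 1/s"
    unfolding g' ww using sb bs b by (subst aux_frac) auto
  have "G a b c w * ((1/b)/(s+1/b)^2) = (1/(w*(1-w)) * ((1/b)/(s+1/b)^2)) * ln (qR a c w / qL a b c w)"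
    unfolding G_def by simp
  also have "\<dots> = (1/s) * ln ((1 + a*b*c* s)/(a*b*c*(s-1)))" unfolding f r ..
  finally show ?thesis by (simp add: w_def)
qed



lemma G_measurable[measurable]: "G a b c \<in> borel_measurable borel"
  unfolding G_def qL_def qR_def by measurable

lemma piece_right:
  assumes a: "a > 0" and b: "b > 0" and c: "c > 0"
  shows "(\<integral>\<^sup>+w. ennreal (G a b c w * indicator {1/(1+b)<..<1} w) \<partial>lborel)
       = (\<integral>\<^sup>+s. ennreal ((1/s) * ln ((s + a*b*c)/(s-1)) * indicator {1<..} s) \<partial>lborel)"
proof -
  have "(\<integral>\<^sup>+w. ennreal (G a b c w * indicator {1/(1+b)<..<1} w) \<partial>lborel)
      = (\<integral>\<^sup>+s. ennreal (G a b c (s/(s+b)) * (b/(s+b)^2) * indicator {1<..} s) \<partial>lborel)"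
  proof -
    have nn: "G a b c w \<ge> 0" if "1/(1+b) < w" "w < 1" for w
    proof (rule G_nonneg[OF a b c])
      have "1/(1+b) > 0" using b by simp
      then show "0 < w" using that by linarith
    qed (use that in auto)
    show ?thesis by (rule subst_frac[of b 1 "G a b c", OF b zero_le_one G_measurable nn])
  qed
  also have "\<dots> = (\<integral>\<^sup>+s. ennreal ((1/s) * ln ((s + a*b*c)/(s-1)) * indicator {1<..} s) \<partial>lborel)"
  proof (intro nn_integral_cong)
    fix s :: real
    show "ennreal (G a b c (s/(s+b)) * (b/(s+b)^2) * indicator {1<..} s)
        = ennreal ((1/s) * ln ((s + a*b*c)/(s-1)) * indicator {1<..} s)"
    proof (cases "s > 1")
      case True then show ?thesis using G_right[OF a b c True] by simp
    qed simp
  qed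
  finally show ?thesis .
qed

lemma piece_left:
  assumes a: "a > 0" and b: "b > 0" and c: "c > 0"
  shows "(\<integral>\<^sup>+w. ennreal (G a b c w * indicator {0<..<1/(1+b)} w) \<partial>lborel)
       = (\<integral>\<^sup>+s. ennreal ((1/s) * ln ((1 + a*b*c* s)/(a*b*c*(s-1))) * indicator {1<..} s) \<partial>lborel)"
proof -
  have e: "1/(1 + 1/b) = 1 - 1/(1+b)" using b by (simp add: field_simps)
  have "(\<integral>\<^sup>+w. ennreal (G a b c w * indicator {0<..<1/(1+b)} w) \<partial>lborel)
      = (\<integral>\<^sup>+x. ennreal (G a b c (1 + (-1)*x) * indicator {0<..<1/(1+b)} (1 + (-1)*x)) \<partial>lborel)"
    using nn_integral_real_affine[of "\<lambda>w. ennreal (G a b c w * indicator {0<..<1/(1+b)} w)" "-1" 1]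
    by simp
  also have "\<dots> = (\<integral>\<^sup>+x. ennreal (G a b c (1 - x) * indicator {1/(1+1/b)<..<1} x) \<partial>lborel)"
    unfolding e by (intro nn_integral_cong) (auto simp: indicator_def)
  also have "\<dots> = (\<integral>\<^sup>+s. ennreal (G a b c (1 - s/(s+1/b)) * ((1/b)/(s+1/b)^2) * indicator {1<..} s) \<partial>lborel)"
  proof -
    have nn: "G a b c (1 - w) \<ge> 0" if "1/(1+1/b) < w" "w < 1" for w
    proof (rule G_nonneg[OF a b c])
      have "1/(1+b) < 1" using b by simp
      moreover have "1 - 1/(1+b) < w" using that(1) unfolding e .
      ultimately show "0 < 1 - w" "1 - w < 1" using that by linarith+
      show "1 - w \<noteq> 1/(1+b)" using that unfolding e by auto
    qed
    show ?thesis
      using subst_frac[of "1/b" 1 "\<lambda>x. G a b c (1 - x)"] b nn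
      by (simp add: add.commute)
  qed
  also have "\<dots> = (\<integral>\<^sup>+s. ennreal ((1/s) * ln ((1 + a*b*c* s)/(a*b*c*(s-1))) * indicator {1<..} s) \<partial>lborel)"
  proof (intro nn_integral_cong)
    fix s :: real
    show "ennreal (G a b c (1 - s/(s+1/b)) * ((1/b)/(s+1/b)^2) * indicator {1<..} s)
        = ennreal ((1/s) * ln ((1 + a*b*c* s)/(a*b*c*(s-1))) * indicator {1<..} s)"
    proof (cases "s > 1")
      case True then show ?thesis using G_left[OF a b c True] by simp
    qed simp
  qed
  finally show ?thesis .
qed

lemma one_d:
  assumes a: "a > 0" and b: "b > 0" and c: "c > 0"
  shows "(\<integral>\<^sup>+w. ennreal (G a b c w * indicator {0<..<1/(1+b)} w) \<partial>lborel)
       + (\<integral>\<^sup>+w. ennreal (G a b c w * indicator {1/(1+b)<..<1} w) \<partial>lborel)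
       = (\<integral>\<^sup>+s. ennreal (B_integrand (a*b*c) s * indicator {1<..} s) \<partial>lborel)"
proof -
  define t where "t = a*b*c"
  have t: "t > 0" using a b c by (simp add: t_def)
  have "(\<integral>\<^sup>+s. ennreal ((1/s) * ln ((1 + t* s)/(t*(s-1))) * indicator {1<..} s) \<partial>lborel)
      + (\<integral>\<^sup>+s. ennreal ((1/s) * ln ((s + t)/(s-1)) * indicator {1<..} s) \<partial>lborel)
      = (\<integral>\<^sup>+s. ennreal ((1/s) * ln ((1 + t* s)/(t*(s-1))) * indicator {1<..} s)
             + ennreal ((1/s) * ln ((s + t)/(s-1)) * indicator {1<..} s) \<partial>lborel)"
    by (rule nn_integral_add[symmetric]) auto
  also have "\<dots> = (\<integral>\<^sup>+s. ennreal (B_integrand t s * indicator {1<..} s) \<partial>lborel)"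
  proof (rule nn_integral_cong)
    fix s :: real
    show "ennreal ((1/s) * ln ((1 + t* s)/(t*(s-1))) * indicator {1<..} s)
             + ennreal ((1/s) * ln ((s + t)/(s-1)) * indicator {1<..} s)
          = ennreal (B_integrand t s * indicator {1<..} s)"
    proof (cases "s > 1")
      case True
      have p1: "(1 + t* s)/(t*(s-1)) \<ge> 1" using True t by (simp add: field_simps)
      have p2: "(s + t)/(s-1) \<ge> 1" using True t by (simp add: field_simps)
      have n1: "(1/s) * ln ((1 + t* s)/(t*(s-1))) \<ge> 0" using p1 True by simp
      have n2: "(1/s) * ln ((s + t)/(s-1)) \<ge> 0" using p2 True by simp
      have "ln ((1 + t* s)/(t*(s-1))) + ln ((s + t)/(s-1))
          = ln ((1 + t* s)/(t*(s-1)) * ((s + t)/(s-1)))"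
        by (rule ln_mult_pos[symmetric]) (use p1 p2 in auto)
      also have "(1 + t* s)/(t*(s-1)) * ((s + t)/(s-1)) = ((s*t+1)*(s+t))/(t*(s-1)^2)"
        by (simp add: power2_eq_square algebra_simps)
      finally have "(1/s) * ln ((1 + t* s)/(t*(s-1))) + (1/s) * ln ((s + t)/(s-1)) = B_integrand t s"
        unfolding B_integrand_def by (simp add: add_divide_distrib[symmetric])
      then show ?thesis using True n1 n2 by (simp add: ennreal_plus[symmetric] del: ennreal_plus)
    qed simp
  qed
  finally show ?thesis
    using piece_left[OF a b c] piece_right[OF a b c] by (simp add: t_def add.commute)
qed



lemma neg_ln_le_powr:
  fixes u :: real
  assumes "u > 0" shows "- ln u \<le> 2 * u powr (-1/2)"
proof -
  have p: "u powr (-1/2) > 0" using assms by simp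
  have "ln (u powr (-1/2)) = (-1/2) * ln u" using assms by (simp add: ln_powr)
  moreover have "ln (u powr (-1/2)) \<le> u powr (-1/2) - 1" using p by (rule ln_le_minus_one)
  ultimately show ?thesis by linarith
qed

lemma B_bound_near:
  assumes t: "t > 0" and s: "1 < s" "s \<le> 2"
  shows "B_integrand t s \<le> (2*t+1)*(2+t)/t + 4 * (s-1) powr (-1/2)"
proof -
  define N where "N = (s*t+1)*(s+t)"
  have s1: "s - 1 > 0" using s by simp
  have Npos: "N > 0" unfolding N_def using s t by (simp add: add_pos_pos)
  have NK: "N/t \<le> (2*t+1)*(2+t)/t"
  proof -
    have "s*t+1 \<le> 2*t+1" using s t by simp
    moreover have "s+t \<le> 2+t" using s by simp
    ultimately have "N \<le> (2*t+1)*(2+t)" unfolding N_def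
      using s t by (intro mult_mono) auto
    then show ?thesis using t by (simp add: divide_right_mono)
  qed
  have eq: "ln (N/(t*(s-1)^2)) = ln (N/t) - 2 * ln (s-1)"
  proof -
    have sp: "(s-1)^2 > 0" using s1 by simp
    have "ln (N/(t*(s-1)^2)) = ln N - ln (t*(s-1)^2)"
      by (rule ln_divide_pos) (use Npos t sp in auto)
    also have "ln (t*(s-1)^2) = ln t + ln ((s-1)^2)"
      by (rule ln_mult_pos) (use t sp in auto)
    also have "ln ((s-1)^2) = 2 * ln (s-1)" using s1 by (simp add: ln_realpow)
    also have "ln N = ln (N/t) + ln t" using ln_divide_pos[OF Npos t] by simp
    finally show ?thesis by simp
  qed
  have br: "ln (N/(t*(s-1)^2)) \<le> (2*t+1)*(2+t)/t + 4 * (s-1) powr (-1/2)"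
  proof -
    have "ln (N/t) \<le> N/t" using Npos t by (intro ln_bound) simp
    moreover have "- ln (s-1) \<le> 2 * (s-1) powr (-1/2)" using s1 by (rule neg_ln_le_powr)
    ultimately show ?thesis unfolding eq using NK by linarith
  qed
  have brnn: "ln (N/(t*(s-1)^2)) \<ge> 0"
  proof -
    have "N - t*(s-1)^2 = s*(t+1)^2" unfolding N_def by (simp add: power2_eq_square algebra_simps)
    then have "N \<ge> t*(s-1)^2" using s by (smt (verit) mult_nonneg_nonneg zero_le_power2)
    then have "N/(t*(s-1)^2) \<ge> 1" using t s1 by simp
    then show ?thesis by simp
  qed
  have "B_integrand t s = (1/s) * ln (N/(t*(s-1)^2))" unfolding B_integrand_def N_def ..
  also have "\<dots> \<le> ln (N/(t*(s-1)^2))"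
  proof -
    have "1/s \<le> 1" using s by simp
    from mult_right_mono[OF this brnn] show ?thesis by simp
  qed
  finally show ?thesis using br by linarith
qed

lemma B_bound_far:
  assumes t: "t > 0" and s: "2 \<le> s"
  shows "B_integrand t s \<le> 4*(1+t)^2/t * (1/s^2)"
proof -
  define X where "X = ((s*t+1)*(s+t))/(t*(s-1)^2)"
  have s1: "s - 1 > 0" using s by simp
  have den: "t*(s-1)^2 > 0" using t s1 by simp
  have "X - 1 = ((s*t+1)*(s+t) - t*(s-1)^2)/(t*(s-1)^2)"
    unfolding X_def using den t s1 by (simp add: diff_divide_distrib)
  also have "(s*t+1)*(s+t) - t*(s-1)^2 = s*(1+t)^2" by (simp add: power2_eq_square algebra_simps)
  finally have X1: "X - 1 = s*(1+t)^2/(t*(s-1)^2)" .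
  have Xpos: "X > 0" unfolding X_def using t s1 s by (simp add: add_pos_pos)
  have "B_integrand t s = (1/s) * ln X" unfolding B_integrand_def X_def ..
  also have "\<dots> \<le> (1/s) * (X - 1)" using Xpos s by (intro mult_left_mono ln_le_minus_one) auto
  also have "\<dots> = (1+t)^2/(t*(s-1)^2)" unfolding X1 using s by (simp add: field_simps)
  also have "\<dots> \<le> (1+t)^2/(t*(s^2/4))"
  proof -
    have "s/2 \<le> s - 1" using s by simp
    then have "(s/2)^2 \<le> (s-1)^2" by (rule power_mono) (use s in simp)
    then have "s^2/4 \<le> (s-1)^2" by (simp add: power_divide)
    moreover have "s^2/4 > 0" using s by simp
    ultimately show ?thesis using t by (intro divide_left_mono mult_left_mono mult_pos_pos) auto
  qed
  also have "\<dots> = 4*(1+t)^2/t * (1/s^2)" by (simp add: field_simps)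
  finally show ?thesis .
qed

lemma B_integrand_nonneg:
  assumes t: "t > 0" and s: "1 < s"
  shows "B_integrand t s \<ge> 0"
proof -
  have s1: "s - 1 > 0" using s by simp
  have "(s*t+1)*(s+t) - t*(s-1)^2 = s*(t+1)^2" by (simp add: power2_eq_square algebra_simps)
  then have "(s*t+1)*(s+t) \<ge> t*(s-1)^2" using s by (smt (verit) mult_nonneg_nonneg zero_le_power2)
  then have "((s*t+1)*(s+t))/(t*(s-1)^2) \<ge> 1" using t s1 by simp
  then show ?thesis unfolding B_integrand_def using s by simp
qed

lemma B_integrand_measurable[measurable]: "B_integrand t \<in> borel_measurable borel"
  unfolding B_integrand_def by measurable

lemma B_finite:
  assumes t: "t > 0"
  shows "(\<integral>\<^sup>+s. ennreal (B_integrand t s * indicator {1<..} s) \<partial>lborel) < \<infinity>"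
proof -
  define K where "K = (2*t+1)*(2+t)/t"
  define C where "C = 4*(1+t)^2/t"
  have Kp: "K \<ge> 0" "C \<ge> 0" using t by (simp_all add: K_def C_def)
  define U1 where "U1 s = ennreal (K * indicator {1..2} s)" for s :: real
  define U2 where "U2 s = ennreal (4 * (s-1) powr (-1/2) * indicator {1..2} s)" for s :: real
  define U3 where "U3 s = ennreal (C * (1/s^2) * indicator {2..} s)" for s :: real
  have le: "ennreal (B_integrand t s * indicator {1<..} s) \<le> U1 s + U2 s + U3 s" for s
  proof (cases "1 < s")
    case True
    show ?thesis
    proof (cases "s \<le> 2")
      case True2: True
      have "B_integrand t s * indicator {1<..} s \<le> K * indicator {1..2} s + 4 * (s-1) powr (-1/2) * indicator {1..2} s"
        using B_bound_near[OF t True True2] True True2 by (simp add: K_def)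
      then have "ennreal (B_integrand t s * indicator {1<..} s)
          \<le> ennreal (K * indicator {1..2} s + 4 * (s-1) powr (-1/2) * indicator {1..2} s)"
        by (rule ennreal_leI)
      also have "\<dots> = U1 s + U2 s"
        unfolding U1_def U2_def using Kp by (intro ennreal_plus) auto
      finally have "ennreal (B_integrand t s * indicator {1<..} s) \<le> U1 s + U2 s" .
      then show ?thesis by (simp add: add_increasing2)
    next
      case False
      have "B_integrand t s * indicator {1<..} s \<le> C * (1/s^2) * indicator {2..} s"
        using B_bound_far[OF t] False True by (simp add: C_def)
      then have "ennreal (B_integrand t s * indicator {1<..} s) \<le> U3 s"
        unfolding U3_def by (rule ennreal_leI)
      then show ?thesis by (simp add: add_increasing)
    qed
  next
    case False then show ?thesis by simp
  qed
  have I1: "integral\<^sup>N lborel U1 < \<infinity>"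
  proof -
    have "integral\<^sup>N lborel U1 = ennreal K * emeasure lborel {1..2::real}"
      unfolding U1_def using Kp
      by (subst nn_integral_cmult_indicator[symmetric]) (auto intro!: nn_integral_cong simp: ennreal_mult' indicator_def)
    then show ?thesis by (simp add: ennreal_mult_less_top)
  qed
  have I2: "integral\<^sup>N lborel U2 < \<infinity>"
  proof -
    have "integral\<^sup>N lborel U2
        = (\<integral>\<^sup>+x. ennreal (4 * ((1 + 1*x) - 1) powr (-1/2) * indicator {1..2} (1 + 1*x)) \<partial>lborel)"
      unfolding U2_def
      using nn_integral_real_affine[of "\<lambda>s. ennreal (4 * (s-1) powr (-1/2) * indicator {1..2} s)" 1 1]
      by simp
    also have "\<dots> = (\<integral>\<^sup>+x. ennreal (4 * x powr (-1/2)) * indicator {0..1} x \<partial>lborel)"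
      by (intro nn_integral_cong) (auto simp: indicator_def)
    also have "\<dots> = ennreal (4 * (1 powr (-1/2+1) / (-1/2+1)))"
    proof (rule nn_integral_has_integral_lebesgue')
      show "((\<lambda>x. 4 * x powr (-1/2)) has_integral 4 * (1 powr (-1/2+1) / (-1/2+1))) {0..1::real}"
        by (intro has_integral_mult_right has_integral_powr_from_0) auto
    qed simp
    finally show ?thesis by simp
  qed
  have I3: "integral\<^sup>N lborel U3 < \<infinity>"
  proof -
    have "integral\<^sup>N lborel U3 = (\<integral>\<^sup>+x. ennreal (C * (1 / x^2)) * indicator {2..} x \<partial>lborel)"
      unfolding U3_def by (intro nn_integral_cong) (auto simp: indicator_def)
    also have "\<dots> = ennreal (C * (1 / (real (2 - 1) * 2 ^ (2 - 1))))"
    proof (rule nn_integral_has_integral_lebesgue')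
      show "((\<lambda>x. C * (1 / x^2)) has_integral C * (1 / (real (2 - 1) * 2 ^ (2 - 1)))) {(2::real)..}"
        by (intro has_integral_mult_right has_integral_inverse_power_to_inf) auto
    qed (use Kp in simp)
    finally show ?thesis by simp
  qed
  have "(\<integral>\<^sup>+s. ennreal (B_integrand t s * indicator {1<..} s) \<partial>lborel) \<le> (\<integral>\<^sup>+s. U1 s + U2 s + U3 s \<partial>lborel)"
    by (intro nn_integral_mono le)
  also have "\<dots> = integral\<^sup>N lborel U1 + integral\<^sup>N lborel U2 + integral\<^sup>N lborel U3"
    unfolding U1_def U2_def U3_def by (simp add: nn_integral_add)
  also have "\<dots> < \<infinity>" using I1 I2 I3 by (simp add: ennreal_add_less_top)
  finally show ?thesis .
qed



definition E1 :: "real \<Rightarrow> real \<Rightarrow> real \<Rightarrow> real \<Rightarrow> real \<Rightarrow> real" where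
  "E1 a b c x0 x1 = x0 + b*c*x1 - c*(1-x0-x1)"
definition E2 :: "real \<Rightarrow> real \<Rightarrow> real \<Rightarrow> real \<Rightarrow> real \<Rightarrow> real" where
  "E2 a b c x0 x1 = -a*x0 + x1 + a*c*(1-x0-x1)"
definition E3 :: "real \<Rightarrow> real \<Rightarrow> real \<Rightarrow> real \<Rightarrow> real \<Rightarrow> real" where
  "E3 a b c x0 x1 = a*b*x0 - b*x1 + (1-x0-x1)"

definition H3 :: "real \<Rightarrow> real \<Rightarrow> real \<Rightarrow> real \<Rightarrow> real \<Rightarrow> real" where
  "H3 a b c x0 w = (if 0 < x0 \<and> x0 < 1 \<and> 0 < w \<and> w < 1 \<and> E1 a b c x0 ((1-x0)*w) \<ge> 0
      \<and> E2 a b c x0 ((1-x0)*w) \<ge> 0 \<and> E3 a b c x0 ((1-x0)*w) \<ge> 0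
     then 1/(x0*(1-x0)*w*(1-w)) else 0)"

lemma frac_ge_iff:
  fixes x q :: real
  assumes "0 < x" "x < 1" "q > 0"
  shows "q/(1+q) \<le> x \<longleftrightarrow> q \<le> x/(1-x)"
proof -
  have "q/(1+q) \<le> x \<longleftrightarrow> q \<le> x*(1+q)" using assms by (simp add: divide_le_eq add_pos_pos)
  also have "\<dots> \<longleftrightarrow> q*(1-x) \<le> x" by (simp add: algebra_simps)
  also have "\<dots> \<longleftrightarrow> q \<le> x/(1-x)" using assms by (simp add: le_divide_eq)
  finally show ?thesis .
qed

lemma frac_le_iff:
  fixes x q :: real
  assumes "0 < x" "x < 1" "q > 0"
  shows "x \<le> q/(1+q) \<longleftrightarrow> x/(1-x) \<le> q"
proof -
  have "x \<le> q/(1+q) \<longleftrightarrow> x*(1+q) \<le> q" using assms by (simp add: le_divide_eq add_pos_pos)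
  also have "\<dots> \<longleftrightarrow> x \<le> q*(1-x)" by (simp add: algebra_simps)
  also have "\<dots> \<longleftrightarrow> x/(1-x) \<le> q" using assms by (simp add: divide_le_eq)
  finally show ?thesis .
qed

lemma pos_mult_nonneg_iff: "0 < (p::real) \<Longrightarrow> (0 \<le> p * y) = (0 \<le> y)"
  by (simp add: zero_le_mult_iff)

lemma cond_iff:
  assumes a: "a > 0" and b: "b > 0" and c: "c > 0" and x: "0 < x0" "x0 < 1"
  shows "(E1 a b c x0 ((1-x0)*w) \<ge> 0 \<and> E3 a b c x0 ((1-x0)*w) \<ge> 0) \<longleftrightarrow> qL a b c w \<le> x0/(1-x0)"
    and "E2 a b c x0 ((1-x0)*w) \<ge> 0 \<longleftrightarrow> x0/(1-x0) \<le> qR a c w"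
proof -
  define q where "q = x0/(1-x0)"
  have x1: "1 - x0 > 0" using x by simp
  have qx: "(1-x0)*q = x0" using x1 by (simp add: q_def)
  have e1: "E1 a b c x0 ((1-x0)*w) = (1-x0)*(q - (c*(1-w) - b*c*w))"
  proof -
    have "(1-x0)*(q - (c*(1-w) - b*c*w)) = x0 - (1-x0)*(c*(1-w) - b*c*w)"
      unfolding right_diff_distrib qx ..
    then show ?thesis unfolding E1_def by (simp add: algebra_simps)
  qed
  have e3: "E3 a b c x0 ((1-x0)*w) = ((1-x0)*(a*b))*(q - (b*w - (1-w))/(a*b))"
  proof -
    have k: "((1-x0)*(a*b))*((b*w - (1-w))/(a*b)) = (1-x0)*(b*w - (1-w))" using a b by simp
    have k2: "((1-x0)*(a*b))*q = (a*b)*((1-x0)*q)" by (simp add: ac_simps)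
    have "((1-x0)*(a*b))*(q - (b*w - (1-w))/(a*b)) = (a*b)*((1-x0)*q) - (1-x0)*(b*w - (1-w))"
      unfolding right_diff_distrib k k2 ..
    also have "\<dots> = (a*b)*x0 - (1-x0)*(b*w - (1-w))" unfolding qx ..
    finally show ?thesis unfolding E3_def by (simp add: algebra_simps)
  qed
  have e2: "E2 a b c x0 ((1-x0)*w) = ((1-x0)*a)*(qR a c w - q)"
  proof -
    have "((1-x0)*a)*(qR a c w - q) = (1-x0)*(w + a*c*(1-w)) - a*((1-x0)*q)"
      using a by (simp add: right_diff_distrib qR_def)
    also have "\<dots> = (1-x0)*(w + a*c*(1-w)) - a*x0" unfolding qx ..
    finally show ?thesis unfolding E2_def by (simp add: algebra_simps)
  qed
  have p1: "(1-x0)*(a*b) > 0" "(1-x0)*a > 0" using x1 a b by auto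
  show "(E1 a b c x0 ((1-x0)*w) \<ge> 0 \<and> E3 a b c x0 ((1-x0)*w) \<ge> 0) \<longleftrightarrow> qL a b c w \<le> x0/(1-x0)"
    unfolding e1 e3 qL_def q_def[symmetric] pos_mult_nonneg_iff[OF x1] pos_mult_nonneg_iff[OF p1(1)]
    by simp
  show "E2 a b c x0 ((1-x0)*w) \<ge> 0 \<longleftrightarrow> x0/(1-x0) \<le> qR a c w"
    unfolding e2 q_def[symmetric] pos_mult_nonneg_iff[OF p1(2)] by simp
qed

lemma inner_integral:
  assumes a: "a > 0" and b: "b > 0" and c: "c > 0" and w: "0 < w" "w < 1" "w \<noteq> 1/(1+b)"
  shows "(\<integral>\<^sup>+x0. ennreal (H3 a b c x0 w) \<partial>lborel) = ennreal (G a b c w)"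
proof -
  define l where "l = qL a b c w"
  define r where "r = qR a c w"
  have l: "l > 0" unfolding l_def by (rule qL_pos[OF a b c w])
  have lr: "l \<le> r" unfolding l_def r_def by (rule qL_le_qR[OF a b c w(1,2)])
  have r: "r > 0" using l lr by simp
  define L where "L = l/(1+l)"
  define R where "R = r/(1+r)"
  have L0: "0 < L" using l by (simp add: L_def)
  have R1: "R < 1" using r by (simp add: R_def)
  have LR: "L \<le> R" unfolding L_def R_def using frac_mono_iff[of 1 l r] l r lr by (simp add: add.commute)
  have wpos: "w*(1-w) > 0" using w by simp
  have H3eq: "H3 a b c x0 w = indicator {L..R} x0 * (1/(w*(1-w)) * (1/(x0*(1-x0))))" for x0
  proof (cases "0 < x0 \<and> x0 < 1")
    case True
    then have x: "0 < x0" "x0 < 1" by auto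
    have i1: "(E1 a b c x0 ((1-x0)*w) \<ge> 0 \<and> E3 a b c x0 ((1-x0)*w) \<ge> 0) \<longleftrightarrow> L \<le> x0"
      unfolding L_def by (subst frac_ge_iff[OF x l]) (unfold l_def, rule cond_iff(1)[OF a b c x])
    have i2: "E2 a b c x0 ((1-x0)*w) \<ge> 0 \<longleftrightarrow> x0 \<le> R"
      unfolding R_def by (subst frac_le_iff[OF x r]) (unfold r_def, rule cond_iff(2)[OF a b c x])
    show ?thesis
    proof (cases "L \<le> x0 \<and> x0 \<le> R")
      case True
      then have "E1 a b c x0 ((1-x0)*w) \<ge> 0" "E3 a b c x0 ((1-x0)*w) \<ge> 0" "E2 a b c x0 ((1-x0)*w) \<ge> 0"
        using i1 i2 by auto
      then show ?thesis using True w x unfolding H3_def by (simp add: indicator_def)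
    next
      case False
      then have "\<not> (E1 a b c x0 ((1-x0)*w) \<ge> 0 \<and> E2 a b c x0 ((1-x0)*w) \<ge> 0 \<and> E3 a b c x0 ((1-x0)*w) \<ge> 0)"
        using i1 i2 by auto
      then show ?thesis using False unfolding H3_def by (auto simp add: indicator_def)
    qed
  next
    case False
    then have "x0 \<notin> {L..R}" using L0 R1 by auto
    then show ?thesis using False unfolding H3_def by (auto simp: indicator_def)
  qed
  define \<Phi> where "\<Phi> x = ln x - ln (1-x)" for x :: real
  have ftc: "((\<lambda>x. 1/(x*(1-x))) has_integral (\<Phi> R - \<Phi> L)) {L..R}"
  proof (rule fundamental_theorem_of_calculus[OF LR])
    fix x assume "x \<in> {L..R}"
    then have x: "0 < x" "x < 1" using L0 R1 by auto
    have "(\<Phi> has_real_derivative (1/x + 1/(1-x))) (at x)"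
      unfolding \<Phi>_def using x by (auto intro!: derivative_eq_intros)
    moreover have "1/x + 1/(1-x) = 1/(x*(1-x))" using x by (simp add: field_simps)
    ultimately show "(\<Phi> has_vector_derivative 1/(x*(1-x))) (at x within {L..R})"
      by (simp add: has_real_derivative_iff_has_vector_derivative[symmetric] has_field_derivative_at_within)
  qed
  have "(\<integral>\<^sup>+x0. ennreal (H3 a b c x0 w) \<partial>lborel)
      = (\<integral>\<^sup>+x0. ennreal (1/(w*(1-w)) * (1/(x0*(1-x0)))) * indicator {L..R} x0 \<partial>lborel)"
    unfolding H3eq by (intro nn_integral_cong) (auto simp: indicator_def)
  also have "\<dots> = ennreal (1/(w*(1-w)) * (\<Phi> R - \<Phi> L))"
  proof (rule nn_integral_has_integral_lebesgue')
    show "((\<lambda>x. 1/(w*(1-w)) * (1/(x*(1-x)))) has_integral 1/(w*(1-w)) * (\<Phi> R - \<Phi> L)) {L..R}"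
      by (rule has_integral_mult_right[OF ftc])
    fix x assume "x \<in> {L..R}"
    then have x: "0 < x" "x < 1" using L0 R1 by auto
    then show "0 \<le> 1/(w*(1-w)) * (1/(x*(1-x)))" using wpos by simp
  qed
  also have "\<Phi> R - \<Phi> L = ln (r/l)"
  proof -
    have "R/(1-R) = r" using r by (simp add: R_def field_simps)
    moreover have "L/(1-L) = l" using l by (simp add: L_def field_simps)
    moreover have "\<Phi> R = ln (R/(1-R))" unfolding \<Phi>_def using R1 L0 LR
      by (subst ln_divide_pos) auto
    moreover have "\<Phi> L = ln (L/(1-L))" unfolding \<Phi>_def using R1 L0 LR
      by (subst ln_divide_pos) auto
    ultimately show ?thesis using l r by (simp add: ln_divide_pos)
  qed
  finally show ?thesis unfolding G_def l_def r_def by simp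
qed



definition H :: "real \<Rightarrow> real \<Rightarrow> real \<Rightarrow> real \<Rightarrow> real \<Rightarrow> real" where
  "H a b c x0 x1 = (if 0 < x0 \<and> 0 < x1 \<and> 0 < 1-x0-x1 \<and> E1 a b c x0 x1 \<ge> 0
      \<and> E2 a b c x0 x1 \<ge> 0 \<and> E3 a b c x0 x1 \<ge> 0
     then 1/(x0*x1*(1-x0-x1)) else 0)"

lemma H3_meas[measurable]: "(\<lambda>(x, y). ennreal (H3 a b c x y)) \<in> borel_measurable (lborel \<Otimes>\<^sub>M lborel)"
  unfolding H3_def E1_def E2_def E3_def by measurable

lemma H_meas[measurable]: "(\<lambda>(x, y). ennreal (H a b c x y)) \<in> borel_measurable (lborel \<Otimes>\<^sub>M lborel)"
  unfolding H_def E1_def E2_def E3_def by measurable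

lemma H_nonneg: "H a b c x0 x1 \<ge> 0"
  unfolding H_def by (auto simp: mult_pos_pos)

lemma H3_nonneg: "H3 a b c x0 w \<ge> 0"
  unfolding H3_def by (auto simp: mult_pos_pos)

lemma aux_cancel: "p \<noteq> 0 \<Longrightarrow> p * (1/(p*z)) = 1/(z::real)"
  by simp

lemma shear:
  "(\<integral>\<^sup>+x1. ennreal (H a b c x0 x1) \<partial>lborel) = (\<integral>\<^sup>+w. ennreal (H3 a b c x0 w) \<partial>lborel)"
proof (cases "0 < x0 \<and> x0 < 1")
  case True
  then have x: "0 < x0" "x0 < 1" by auto
  have m: "(\<lambda>x1. ennreal (H a b c x0 x1)) \<in> borel_measurable borel"
    unfolding H_def E1_def E2_def E3_def by measurable
  have "(\<integral>\<^sup>+x1. ennreal (H a b c x0 x1) \<partial>lborel)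
      = ennreal \<bar>1-x0\<bar> * (\<integral>\<^sup>+w. ennreal (H a b c x0 (0 + (1-x0)*w)) \<partial>lborel)"
    by (rule nn_integral_real_affine[OF m]) (use x in simp)
  also have "\<dots> = (\<integral>\<^sup>+w. ennreal (1-x0) * ennreal (H a b c x0 ((1-x0)*w)) \<partial>lborel)"
    using x by (subst nn_integral_cmult) (auto simp: H_def E1_def E2_def E3_def)
  also have "\<dots> = (\<integral>\<^sup>+w. ennreal (H3 a b c x0 w) \<partial>lborel)"
  proof (intro nn_integral_cong)
    fix w :: real
    have eq: "(1-x0) * H a b c x0 ((1-x0)*w) = H3 a b c x0 w"
    proof -
      have c1: "0 < (1-x0)*w \<longleftrightarrow> 0 < w" using x by (simp add: zero_less_mult_iff)
      have e: "1 - x0 - (1-x0)*w = (1-x0)*(1-w)" by (simp add: algebra_simps)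
      have c2: "0 < (1-x0)*(1-w) \<longleftrightarrow> w < 1" using x by (simp add: zero_less_mult_iff)
      show ?thesis
      proof (cases "0 < w \<and> w < 1")
        case True
        have "x0*((1-x0)*w)*((1-x0)*(1-w)) = (1-x0)*(x0*(1-x0)*w*(1-w))" by (simp add: algebra_simps)
        then have "(1-x0) * (1/(x0*((1-x0)*w)*((1-x0)*(1-w)))) = 1/(x0*(1-x0)*w*(1-w))"
          using x by (simp only: aux_cancel)
        then show ?thesis unfolding H_def H3_def e using x True c1 c2 by simp
      next
        case False
        then show ?thesis unfolding H_def H3_def e using x c1 c2 by auto
      qed
    qed
    show "ennreal (1-x0) * ennreal (H a b c x0 ((1-x0)*w)) = ennreal (H3 a b c x0 w)"
    proof -
      have "ennreal (1-x0) * ennreal (H a b c x0 ((1-x0)*w)) = ennreal ((1-x0) * H a b c x0 ((1-x0)*w))"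
        by (rule ennreal_mult[symmetric]) (use x H_nonneg in auto)
      then show ?thesis using eq by simp
    qed
  qed
  finally show ?thesis .
next
  case False
  then have "H a b c x0 x1 = 0" for x1 unfolding H_def by auto
  moreover have "H3 a b c x0 w = 0" for w unfolding H3_def using False by auto
  ultimately show ?thesis by simp
qed

lemma two_d_w:
  assumes a: "a > 0" and b: "b > 0" and c: "c > 0"
  shows "(\<integral>\<^sup>+x0. (\<integral>\<^sup>+x1. ennreal (H a b c x0 x1) \<partial>lborel) \<partial>lborel)
       = (\<integral>\<^sup>+w. ennreal (G a b c w * indicator {0<..<1/(1+b)} w) \<partial>lborel)
       + (\<integral>\<^sup>+w. ennreal (G a b c w * indicator {1/(1+b)<..<1} w) \<partial>lborel)"
proof -
  have "(\<integral>\<^sup>+x0. (\<integral>\<^sup>+x1. ennreal (H a b c x0 x1) \<partial>lborel) \<partial>lborel)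
      = (\<integral>\<^sup>+x0. (\<integral>\<^sup>+w. ennreal (H3 a b c x0 w) \<partial>lborel) \<partial>lborel)"
    by (simp add: shear)
  also have "\<dots> = (\<integral>\<^sup>+w. (\<integral>\<^sup>+x0. ennreal (H3 a b c x0 w) \<partial>lborel) \<partial>lborel)"
    by (rule lborel_pair.Fubini'[symmetric]) simp
  also have "\<dots> = (\<integral>\<^sup>+w. ennreal (G a b c w * indicator {0<..<1/(1+b)} w)
                      + ennreal (G a b c w * indicator {1/(1+b)<..<1} w) \<partial>lborel)"
  proof (rule nn_integral_cong_AE)
    show "AE w in lborel. (\<integral>\<^sup>+x0. ennreal (H3 a b c x0 w) \<partial>lborel)
        = ennreal (G a b c w * indicator {0<..<1/(1+b)} w) + ennreal (G a b c w * indicator {1/(1+b)<..<1} w)"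
      using AE_lborel_singleton[of "1/(1+b)"]
    proof (rule eventually_mono)
      fix w :: real assume wne: "w \<noteq> 1/(1+b)"
      have w0: "0 < 1/(1+b)" "1/(1+b) < 1" using b by auto
      show "(\<integral>\<^sup>+x0. ennreal (H3 a b c x0 w) \<partial>lborel)
        = ennreal (G a b c w * indicator {0<..<1/(1+b)} w) + ennreal (G a b c w * indicator {1/(1+b)<..<1} w)"
      proof (cases "0 < w \<and> w < 1")
        case True
        then have "(\<integral>\<^sup>+x0. ennreal (H3 a b c x0 w) \<partial>lborel) = ennreal (G a b c w)"
          using inner_integral[OF a b c _ _ wne] by auto
        moreover have "w < 1/(1+b) \<or> 1/(1+b) < w" using wne by linarith
        ultimately show ?thesis using True by (auto simp: indicator_def)
      next
        case False
        then have "H3 a b c x0 w = 0" for x0 unfolding H3_def by auto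
        moreover have "\<not> (0 < w \<and> w < 1/(1+b))" "\<not> (1/(1+b) < w \<and> w < 1)"
          using False w0 by linarith+
        then have "w \<notin> {0<..<1/(1+b)}" "w \<notin> {1/(1+b)<..<1}" by auto
        ultimately show ?thesis by simp
      qed
    qed
  qed
  also have "\<dots> = (\<integral>\<^sup>+w. ennreal (G a b c w * indicator {0<..<1/(1+b)} w) \<partial>lborel)
       + (\<integral>\<^sup>+w. ennreal (G a b c w * indicator {1/(1+b)<..<1} w) \<partial>lborel)"
    by (rule nn_integral_add) auto
  finally show ?thesis .
qed



definition det2 :: "real \<times> real \<Rightarrow> real \<times> real \<Rightarrow> real" where
  "det2 u w = fst u * snd w - snd u * fst w"

lemma lin_change_aux:
  fixes K :: "real \<times> real \<Rightarrow> ennreal" and e f p :: "real \<times> real"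
  assumes K[measurable]: "K \<in> borel_measurable borel"
    and D: "det2 e f \<noteq> 0" and e1: "fst e \<noteq> 0"
  shows "(\<integral>\<^sup>+X. K X \<partial>lborel)
       = ennreal \<bar>det2 e f\<bar> * (\<integral>\<^sup>+x0. (\<integral>\<^sup>+x1. K (p + x0 *\<^sub>R e + x1 *\<^sub>R f) \<partial>lborel) \<partial>lborel)"
proof -
  define c' where "c' = det2 e f / fst e"
  have c': "c' \<noteq> 0" using D e1 by (simp add: c'_def)
  define t' where "t' u = snd p + (snd e / fst e) * (u - fst p)" for u
  define t where "t x1 = fst p + x1 * fst f" for x1
  have phi: "p + x0 *\<^sub>R e + x1 *\<^sub>R f = (t x1 + fst e * x0, t' (t x1 + fst e * x0) + c' * x1)" for x0 x1
  proof -
    have "snd p + x0 * snd e + x1 * snd f = t' (t x1 + fst e * x0) + c' * x1"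
      unfolding t'_def t_def c'_def det2_def using e1 by (simp add: field_simps)
    then show ?thesis by (simp add: prod_eq_iff t_def)
  qed
  have KM: "K \<in> borel_measurable (lborel \<Otimes>\<^sub>M lborel)"
    unfolding lborel_prod by simp
  have "(\<integral>\<^sup>+X. K X \<partial>lborel) = (\<integral>\<^sup>+X. K X \<partial>(lborel \<Otimes>\<^sub>M lborel))"
    by (simp add: lborel_prod)
  also have "\<dots> = (\<integral>\<^sup>+u. (\<integral>\<^sup>+v. K (u, v) \<partial>lborel) \<partial>lborel)"
    by (rule lborel.nn_integral_fst[symmetric]) (simp add: KM)
  also have "\<dots> = (\<integral>\<^sup>+u. ennreal \<bar>c'\<bar> * (\<integral>\<^sup>+x1. K (u, t' u + c' * x1) \<partial>lborel) \<partial>lborel)"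
    by (intro nn_integral_cong nn_integral_real_affine c') measurable
  also have "\<dots> = ennreal \<bar>c'\<bar> * (\<integral>\<^sup>+u. (\<integral>\<^sup>+x1. K (u, t' u + c' * x1) \<partial>lborel) \<partial>lborel)"
    by (rule nn_integral_cmult) (unfold t'_def, measurable)
  also have "(\<integral>\<^sup>+u. (\<integral>\<^sup>+x1. K (u, t' u + c' * x1) \<partial>lborel) \<partial>lborel)
      = (\<integral>\<^sup>+x1. (\<integral>\<^sup>+u. K (u, t' u + c' * x1) \<partial>lborel) \<partial>lborel)"
    by (rule lborel_pair.Fubini') (unfold t'_def, measurable)
  also have "\<dots> = (\<integral>\<^sup>+x1. ennreal \<bar>fst e\<bar> * (\<integral>\<^sup>+x0. K (t x1 + fst e * x0, t' (t x1 + fst e * x0) + c' * x1) \<partial>lborel) \<partial>lborel)"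
    by (intro nn_integral_cong nn_integral_real_affine e1) (unfold t'_def, measurable)
  also have "\<dots> = ennreal \<bar>fst e\<bar> * (\<integral>\<^sup>+x1. (\<integral>\<^sup>+x0. K (p + x0 *\<^sub>R e + x1 *\<^sub>R f) \<partial>lborel) \<partial>lborel)"
    unfolding phi by (rule nn_integral_cmult) (unfold t'_def t_def, measurable)
  also have "(\<integral>\<^sup>+x1. (\<integral>\<^sup>+x0. K (p + x0 *\<^sub>R e + x1 *\<^sub>R f) \<partial>lborel) \<partial>lborel)
      = (\<integral>\<^sup>+x0. (\<integral>\<^sup>+x1. K (p + x0 *\<^sub>R e + x1 *\<^sub>R f) \<partial>lborel) \<partial>lborel)"
    by (rule lborel_pair.Fubini') measurable
  finally have "(\<integral>\<^sup>+X. K X \<partial>lborel) = ennreal \<bar>c'\<bar> * (ennreal \<bar>fst e\<bar> *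
      (\<integral>\<^sup>+x0. (\<integral>\<^sup>+x1. K (p + x0 *\<^sub>R e + x1 *\<^sub>R f) \<partial>lborel) \<partial>lborel))" .
  also have "ennreal \<bar>c'\<bar> * (ennreal \<bar>fst e\<bar> * Q) = ennreal \<bar>det2 e f\<bar> * Q" for Q
  proof -
    have "\<bar>c'\<bar> * \<bar>fst e\<bar> = \<bar>det2 e f\<bar>" using e1 by (simp add: c'_def abs_divide)
    then show ?thesis by (simp add: mult.assoc[symmetric] ennreal_mult[symmetric])
  qed
  finally show ?thesis .
qed

lemma lin_change:
  fixes K :: "real \<times> real \<Rightarrow> ennreal" and e f p :: "real \<times> real"
  assumes K[measurable]: "K \<in> borel_measurable borel"
    and D: "det2 e f \<noteq> 0"
  shows "(\<integral>\<^sup>+X. K X \<partial>lborel)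
       = ennreal \<bar>det2 e f\<bar> * (\<integral>\<^sup>+x0. (\<integral>\<^sup>+x1. K (p + x0 *\<^sub>R e + x1 *\<^sub>R f) \<partial>lborel) \<partial>lborel)"
proof (cases "fst e = 0")
  case False
  then show ?thesis using lin_change_aux[OF K D] by blast
next
  case True
  then have f1: "fst f \<noteq> 0" using D by (auto simp: det2_def)
  have fe: "det2 f e = - det2 e f" by (simp add: det2_def algebra_simps)
  have D': "det2 f e \<noteq> 0" "\<bar>det2 f e\<bar> = \<bar>det2 e f\<bar>" using D unfolding fe by auto
  have "(\<integral>\<^sup>+X. K X \<partial>lborel)
      = ennreal \<bar>det2 f e\<bar> * (\<integral>\<^sup>+x1. (\<integral>\<^sup>+x0. K (p + x1 *\<^sub>R f + x0 *\<^sub>R e) \<partial>lborel) \<partial>lborel)"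
    by (rule lin_change_aux[OF K D'(1) f1])
  also have "(\<integral>\<^sup>+x1. (\<integral>\<^sup>+x0. K (p + x1 *\<^sub>R f + x0 *\<^sub>R e) \<partial>lborel) \<partial>lborel)
      = (\<integral>\<^sup>+x0. (\<integral>\<^sup>+x1. K (p + x0 *\<^sub>R e + x1 *\<^sub>R f) \<partial>lborel) \<partial>lborel)"
    by (subst lborel_pair.Fubini') (measurable, simp add: add_ac)
  finally show ?thesis using D'(2) by simp
qed



lemma det2_add_left: "det2 (u + v) w = det2 u w + det2 v w"
  and det2_add_right: "det2 u (v + w) = det2 u v + det2 u w"
  and det2_diff_left: "det2 (u - v) w = det2 u w - det2 v w"
  and det2_diff_right: "det2 u (v - w) = det2 u v - det2 u w"
  and det2_scale_left: "det2 (c *\<^sub>R u) w = c * det2 u w"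
  and det2_scale_right: "det2 u (c *\<^sub>R w) = c * det2 u w"
  and det2_self: "det2 u u = 0"
  and det2_swap: "det2 w u = - det2 u w"
  by (simp_all add: det2_def algebra_simps)

lemmas det2_simps = det2_add_left det2_add_right
  det2_scale_left det2_scale_right det2_self

locale tri =
  fixes P0 P1 P2 :: "real \<times> real"
  assumes Dne: "det2 (P0 - P2) (P1 - P2) \<noteq> 0"
begin

abbreviation "e \<equiv> P0 - P2"
abbreviation "f \<equiv> P1 - P2"
abbreviation "D \<equiv> det2 (P0 - P2) (P1 - P2)"

definition lam0 :: "real \<times> real \<Rightarrow> real" where "lam0 X = det2 (X - P2) f / D"
definition lam1 :: "real \<times> real \<Rightarrow> real" where "lam1 X = det2 e (X - P2) / D"
definition lam2 :: "real \<times> real \<Rightarrow> real" where "lam2 X = 1 - lam0 X - lam1 X"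
definition mu0 :: "real \<times> real \<Rightarrow> real" where "mu0 v = det2 v f / D"
definition mu1 :: "real \<times> real \<Rightarrow> real" where "mu1 v = det2 e v / D"
definition mu2 :: "real \<times> real \<Rightarrow> real" where "mu2 v = - mu0 v - mu1 v"

lemma mu_recon: "v = mu0 v *\<^sub>R e + mu1 v *\<^sub>R f"
proof -
  have n1: "det2 v f * fst e + det2 e v * fst f = fst v * D" by (simp add: det2_def algebra_simps)
  have n2: "det2 v f * snd e + det2 e v * snd f = snd v * D" by (simp add: det2_def algebra_simps)
  have "mu0 v * fst e + mu1 v * fst f = (det2 v f * fst e + det2 e v * fst f) / D"
    unfolding mu0_def mu1_def by (simp add: add_divide_distrib)
  also have "\<dots> = fst v" unfolding n1 using Dne by simp
  finally have 1: "mu0 v * fst e + mu1 v * fst f = fst v" .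
  have "mu0 v * snd e + mu1 v * snd f = (det2 v f * snd e + det2 e v * snd f) / D"
    unfolding mu0_def mu1_def by (simp add: add_divide_distrib)
  also have "\<dots> = snd v" unfolding n2 using Dne by simp
  finally have 2: "mu0 v * snd e + mu1 v * snd f = snd v" .
  show ?thesis using 1 2 by (simp add: prod_eq_iff)
qed

lemma mu_comb: "mu0 (x *\<^sub>R e + y *\<^sub>R f) = x" "mu1 (x *\<^sub>R e + y *\<^sub>R f) = y"
proof -
  have "det2 (x *\<^sub>R e + y *\<^sub>R f) f = x * D" by (simp only: det2_simps mult_zero_right add_0_right add_0_left)
  then show "mu0 (x *\<^sub>R e + y *\<^sub>R f) = x" unfolding mu0_def using Dne by simp
  have "det2 e (x *\<^sub>R e + y *\<^sub>R f) = y * D" by (simp only: det2_simps mult_zero_right add_0_right add_0_left)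
  then show "mu1 (x *\<^sub>R e + y *\<^sub>R f) = y" unfolding mu1_def using Dne by simp
qed

lemma lam_affine: "lam0 (P2 + x *\<^sub>R e + y *\<^sub>R f) = x" "lam1 (P2 + x *\<^sub>R e + y *\<^sub>R f) = y"
proof -
  have "P2 + x *\<^sub>R e + y *\<^sub>R f - P2 = x *\<^sub>R e + y *\<^sub>R f" by simp
  then show "lam0 (P2 + x *\<^sub>R e + y *\<^sub>R f) = x" "lam1 (P2 + x *\<^sub>R e + y *\<^sub>R f) = y"
    using mu_comb unfolding lam0_def lam1_def mu0_def mu1_def by simp_all
qed

lemma lam_recon: "X = P2 + lam0 X *\<^sub>R e + lam1 X *\<^sub>R f"
proof -
  have "X - P2 = lam0 X *\<^sub>R e + lam1 X *\<^sub>R f"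
    using mu_recon[of "X - P2"] unfolding lam0_def lam1_def mu0_def mu1_def .
  then show ?thesis by (simp add: algebra_simps)
qed

lemma bary_eq: "x0 + x1 + x2 = 1 \<Longrightarrow> x0 *\<^sub>R P0 + x1 *\<^sub>R P1 + x2 *\<^sub>R P2 = P2 + x0 *\<^sub>R e + x1 *\<^sub>R f"
proof -
  assume s: "x0 + x1 + x2 = 1"
  have "x0 *\<^sub>R P0 + x1 *\<^sub>R P1 + x2 *\<^sub>R P2 - (P2 + x0 *\<^sub>R e + x1 *\<^sub>R f) = (x0 + x1 + x2 - 1) *\<^sub>R P2"
    by (simp add: algebra_simps)
  then show ?thesis using s by simp
qed

lemma lam_bary:
  assumes "x0 + x1 + x2 = 1"
  shows "lam0 (x0 *\<^sub>R P0 + x1 *\<^sub>R P1 + x2 *\<^sub>R P2) = x0"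
    "lam1 (x0 *\<^sub>R P0 + x1 *\<^sub>R P1 + x2 *\<^sub>R P2) = x1"
    "lam2 (x0 *\<^sub>R P0 + x1 *\<^sub>R P1 + x2 *\<^sub>R P2) = x2"
  using assms by (simp_all add: bary_eq lam_affine lam2_def)

lemma lam_add:
  "lam0 (X + h *\<^sub>R v) = lam0 X + h * mu0 v"
  "lam1 (X + h *\<^sub>R v) = lam1 X + h * mu1 v"
  "lam2 (X + h *\<^sub>R v) = lam2 X + h * mu2 v"
proof -
  have x: "X + h *\<^sub>R v - P2 = (X - P2) + h *\<^sub>R v" by simp
  have "det2 (X + h *\<^sub>R v - P2) f = det2 (X - P2) f + h * det2 v f"
    unfolding x det2_add_left det2_scale_left ..
  then show "lam0 (X + h *\<^sub>R v) = lam0 X + h * mu0 v"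
    unfolding lam0_def mu0_def by (simp add: add_divide_distrib)
  have "det2 e (X + h *\<^sub>R v - P2) = det2 e (X - P2) + h * det2 e v"
    unfolding x det2_add_right det2_scale_right ..
  then show "lam1 (X + h *\<^sub>R v) = lam1 X + h * mu1 v"
    unfolding lam1_def mu1_def by (simp add: add_divide_distrib)
  then show "lam2 (X + h *\<^sub>R v) = lam2 X + h * mu2 v"
    unfolding lam2_def mu2_def using \<open>lam0 (X + h *\<^sub>R v) = lam0 X + h * mu0 v\<close> by (simp add: algebra_simps)
qed

lemma open_tri_char: "X \<in> open_tri P0 P1 P2 \<longleftrightarrow> 0 < lam0 X \<and> 0 < lam1 X \<and> 0 < lam2 X"
proof
  assume "X \<in> open_tri P0 P1 P2"
  then obtain x0 x1 x2 where X: "X = x0 *\<^sub>R P0 + x1 *\<^sub>R P1 + x2 *\<^sub>R P2"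
    and p: "0 < x0" "0 < x1" "0 < x2" "x0 + x1 + x2 = 1" unfolding open_tri_def by blast
  show "0 < lam0 X \<and> 0 < lam1 X \<and> 0 < lam2 X" using lam_bary[OF p(4)] p X by simp
next
  assume p: "0 < lam0 X \<and> 0 < lam1 X \<and> 0 < lam2 X"
  have s: "lam0 X + lam1 X + lam2 X = 1" by (simp add: lam2_def)
  have "X = lam0 X *\<^sub>R P0 + lam1 X *\<^sub>R P1 + lam2 X *\<^sub>R P2"
    using bary_eq[OF s] lam_recon[of X] by simp
  then show "X \<in> open_tri P0 P1 P2" unfolding open_tri_def using p s by blast
qed

end



context tri begin

lemma comb3:
  "u *\<^sub>R ((1 / (1 + a)) *\<^sub>R (P0 + a *\<^sub>R P1)) + v *\<^sub>R ((1 / (1 + b)) *\<^sub>R (P1 + b *\<^sub>R P2))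
     + w *\<^sub>R ((1 / (1 + c)) *\<^sub>R (P2 + c *\<^sub>R P0))
   = (u/(1+a) + c * (w/(1+c))) *\<^sub>R P0 + (a * (u/(1+a)) + v/(1+b)) *\<^sub>R P1 + (b * (v/(1+b)) + w/(1+c)) *\<^sub>R P2"
  by (simp add: algebra_simps)

lemma ideal_tri_char:
  assumes a: "a > 0" and b: "b > 0" and c: "c > 0"
  shows "X \<in> ideal_tri P0 P1 P2 a b c \<longleftrightarrow>
    (0 < lam0 X \<and> 0 < lam1 X \<and> 0 < 1 - lam0 X - lam1 X \<and> E1 a b c (lam0 X) (lam1 X) \<ge> 0
      \<and> E2 a b c (lam0 X) (lam1 X) \<ge> 0 \<and> E3 a b c (lam0 X) (lam1 X) \<ge> 0)"
proof -
  define t where "t = a * b * c"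
  have t: "t > 0" using a b c by (simp add: t_def)
  have conv: "X \<in> convex hull {(1 / (1 + a)) *\<^sub>R (P0 + a *\<^sub>R P1), (1 / (1 + b)) *\<^sub>R (P1 + b *\<^sub>R P2),
                  (1 / (1 + c)) *\<^sub>R (P2 + c *\<^sub>R P0)}
      \<longleftrightarrow> (E1 a b c (lam0 X) (lam1 X) \<ge> 0 \<and> E2 a b c (lam0 X) (lam1 X) \<ge> 0 \<and> E3 a b c (lam0 X) (lam1 X) \<ge> 0)"
    (is "?L \<longleftrightarrow> ?R")
  proof
    assume ?L
    then obtain u v w where uvw: "0 \<le> u" "0 \<le> v" "0 \<le> w" "u + v + w = 1"
      and X: "X = u *\<^sub>R ((1 / (1 + a)) *\<^sub>R (P0 + a *\<^sub>R P1)) + v *\<^sub>R ((1 / (1 + b)) *\<^sub>R (P1 + b *\<^sub>R P2))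
     + w *\<^sub>R ((1 / (1 + c)) *\<^sub>R (P2 + c *\<^sub>R P0))"
      unfolding convex_hull_3 by blast
    define uq where "uq = u/(1+a)"
    define vq where "vq = v/(1+b)"
    define wq where "wq = w/(1+c)"
    have u: "u = (1+a) * uq" "v = (1+b) * vq" "w = (1+c) * wq" using a b c by (simp_all add: uq_def vq_def wq_def)
    have pos: "0 \<le> uq" "0 \<le> vq" "0 \<le> wq" using uvw a b c by (simp_all add: uq_def vq_def wq_def)
    have s: "(uq + c * wq) + (a * uq + vq) + (b * vq + wq) = 1"
      using uvw(4) unfolding u by (simp add: algebra_simps)
    have X': "X = (uq + c * wq) *\<^sub>R P0 + (a * uq + vq) *\<^sub>R P1 + (b * vq + wq) *\<^sub>R P2"
      unfolding X comb3 uq_def vq_def wq_def ..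
    have l: "lam0 X = uq + c * wq" "lam1 X = a * uq + vq" using lam_bary[OF s] X' by simp_all
    have x2: "1 - (uq + c * wq) - (a * uq + vq) = b * vq + wq" using s by simp
    have "E1 a b c (lam0 X) (lam1 X) = uq * (1+t)"
      unfolding E1_def l x2 t_def by (simp add: algebra_simps)
    moreover have "E2 a b c (lam0 X) (lam1 X) = vq * (1+t)"
      unfolding E2_def l x2 t_def by (simp add: algebra_simps)
    moreover have "E3 a b c (lam0 X) (lam1 X) = wq * (1+t)"
      unfolding E3_def l x2 t_def by (simp add: algebra_simps)
    ultimately show ?R using pos t by simp
  next
    assume R: ?R
    define l0 where "l0 = lam0 X"
    define l1 where "l1 = lam1 X"
    define l2 where "l2 = 1 - l0 - l1"
    define uq where "uq = E1 a b c l0 l1/(1+t)"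
    define vq where "vq = E2 a b c l0 l1/(1+t)"
    define wq where "wq = E3 a b c l0 l1/(1+t)"
    have t1: "1 + t \<noteq> 0" using t by simp
    have n0: "E1 a b c l0 l1 + c * E3 a b c l0 l1 = (1+t) * l0"
      unfolding E1_def E3_def t_def by (simp add: algebra_simps)
    have n1: "a * E1 a b c l0 l1 + E2 a b c l0 l1 = (1+t) * l1"
      unfolding E1_def E2_def t_def by (simp add: algebra_simps)
    have n2: "b * E2 a b c l0 l1 + E3 a b c l0 l1 = (1+t) * l2"
      unfolding E2_def E3_def t_def l2_def by (simp add: algebra_simps)
    have c0: "uq + c * wq = l0"
    proof -
      have "uq + c * wq = (E1 a b c l0 l1 + c * E3 a b c l0 l1)/(1+t)"
        unfolding uq_def wq_def by (simp add: add_divide_distrib)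
      then show ?thesis unfolding n0 using t1 by simp
    qed
    have c1: "a * uq + vq = l1"
    proof -
      have "a * uq + vq = (a * E1 a b c l0 l1 + E2 a b c l0 l1)/(1+t)"
        unfolding uq_def vq_def by (simp add: add_divide_distrib)
      then show ?thesis unfolding n1 using t1 by simp
    qed
    have c2: "b * vq + wq = l2"
    proof -
      have "b * vq + wq = (b * E2 a b c l0 l1 + E3 a b c l0 l1)/(1+t)"
        unfolding vq_def wq_def by (simp add: add_divide_distrib)
      then show ?thesis unfolding n2 using t1 by simp
    qed
    define u where "u = (1+a) * uq"
    define v where "v = (1+b) * vq"
    define w where "w = (1+c) * wq"
    have uu: "uq = u/(1+a)" "vq = v/(1+b)" "wq = w/(1+c)" using a b c by (simp_all add: u_def v_def w_def)
    have uvw: "0 \<le> u" "0 \<le> v" "0 \<le> w" using R a b c t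
      unfolding u_def v_def w_def uq_def vq_def wq_def l0_def l1_def by simp_all
    have s: "u + v + w = 1"
    proof -
      have "u + v + w = (uq + c * wq) + (a * uq + vq) + (b * vq + wq)"
        unfolding u_def v_def w_def by (simp add: algebra_simps)
      also have "\<dots> = 1" unfolding c0 c1 c2 l2_def by simp
      finally show ?thesis .
    qed
    have "X = l0 *\<^sub>R P0 + l1 *\<^sub>R P1 + l2 *\<^sub>R P2"
      using bary_eq[of l0 l1 l2] lam_recon[of X] unfolding l0_def l1_def l2_def by simp
    also have "\<dots> = u *\<^sub>R ((1 / (1 + a)) *\<^sub>R (P0 + a *\<^sub>R P1)) + v *\<^sub>R ((1 / (1 + b)) *\<^sub>R (P1 + b *\<^sub>R P2))
     + w *\<^sub>R ((1 / (1 + c)) *\<^sub>R (P2 + c *\<^sub>R P0))" unfolding comb3 uu[symmetric] c0 c1 c2 ..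
    finally show ?L unfolding convex_hull_3 using uvw s by blast
  qed
  have "X \<in> ideal_tri P0 P1 P2 a b c \<longleftrightarrow> X \<in> open_tri P0 P1 P2 \<and> ?R"
    unfolding ideal_tri_def using conv by blast
  then show ?thesis unfolding open_tri_char lam2_def by auto
qed

end



context tri begin

definition zmax :: "real \<times> real \<Rightarrow> real \<times> real \<Rightarrow> real" where
  "zmax X v = max (mu0 v / lam0 X) (max (mu1 v / lam1 X) (mu2 v / lam2 X))"
definition zmin :: "real \<times> real \<Rightarrow> real \<times> real \<Rightarrow> real" where
  "zmin X v = min (mu0 v / lam0 X) (min (mu1 v / lam1 X) (mu2 v / lam2 X))"

lemma pos_iff_scaled:
  fixes l k m :: real
  assumes "l > 0" shows "0 < l + k * m \<longleftrightarrow> 0 < 1 + k * (m / l)"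
proof -
  have "l + k * m = l * (1 + k * (m / l))" using assms by (simp add: field_simps)
  then show ?thesis using assms by (simp add: zero_less_mult_iff)
qed

lemma min3_pos_iff:
  fixes k z0 z1 z2 :: real
  assumes "k \<ge> 0"
  shows "(0 < 1 + k * z0 \<and> 0 < 1 + k * z1 \<and> 0 < 1 + k * z2) \<longleftrightarrow> 0 < 1 + k * min z0 (min z1 z2)"
proof -
  have "k * min z0 (min z1 z2) \<le> k * z0" "k * min z0 (min z1 z2) \<le> k * z1" "k * min z0 (min z1 z2) \<le> k * z2"
    using assms by (intro mult_left_mono; simp)+
  moreover have "min z0 (min z1 z2) = z0 \<or> min z0 (min z1 z2) = z1 \<or> min z0 (min z1 z2) = z2"
    by linarith
  ultimately show ?thesis by auto
qed

lemma max3_pos_iff: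
  fixes k z0 z1 z2 :: real
  assumes "k \<ge> 0"
  shows "(0 < 1 - k * z0 \<and> 0 < 1 - k * z1 \<and> 0 < 1 - k * z2) \<longleftrightarrow> 0 < 1 - k * max z0 (max z1 z2)"
proof -
  have "k * z0 \<le> k * max z0 (max z1 z2)" "k * z1 \<le> k * max z0 (max z1 z2)" "k * z2 \<le> k * max z0 (max z1 z2)"
    using assms by (intro mult_left_mono; simp)+
  moreover have "max z0 (max z1 z2) = z0 \<or> max z0 (max z1 z2) = z1 \<or> max z0 (max z1 z2) = z2"
    by linarith
  ultimately show ?thesis by auto
qed

lemma memb_plus:
  assumes X: "X \<in> open_tri P0 P1 P2" and k: "k \<ge> 0"
  shows "X + k *\<^sub>R v \<in> open_tri P0 P1 P2 \<longleftrightarrow> 0 < 1 + k * zmin X v"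
proof -
  have l: "0 < lam0 X" "0 < lam1 X" "0 < lam2 X" using X open_tri_char by auto
  show ?thesis
    unfolding open_tri_char lam_add pos_iff_scaled[OF l(1)] pos_iff_scaled[OF l(2)] pos_iff_scaled[OF l(3)]
      zmin_def by (rule min3_pos_iff[OF k])
qed

lemma memb_minus:
  assumes X: "X \<in> open_tri P0 P1 P2" and k: "k \<ge> 0"
  shows "X - k *\<^sub>R v \<in> open_tri P0 P1 P2 \<longleftrightarrow> 0 < 1 - k * zmax X v"
proof -
  have l: "0 < lam0 X" "0 < lam1 X" "0 < lam2 X" using X open_tri_char by auto
  have e: "X - k *\<^sub>R v = X + (-k) *\<^sub>R v" by simp
  have m: "1 + - k * z = 1 - k * z" for z :: real by simp
  show ?thesis
    unfolding e open_tri_char lam_add pos_iff_scaled[OF l(1)] pos_iff_scaled[OF l(2)] pos_iff_scaled[OF l(3)]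
      zmax_def m by (rule max3_pos_iff[OF k])
qed

lemma z_sign:
  assumes X: "X \<in> open_tri P0 P1 P2" and v: "v \<noteq> 0"
  shows "zmax X v > 0" "zmin X v < 0"
proof -
  have l: "0 < lam0 X" "0 < lam1 X" "0 < lam2 X" using X open_tri_char by auto
  define z0 where "z0 = mu0 v / lam0 X"
  define z1 where "z1 = mu1 v / lam1 X"
  define z2 where "z2 = mu2 v / lam2 X"
  have sum: "lam0 X * z0 + lam1 X * z1 + lam2 X * z2 = 0"
    using l unfolding z0_def z1_def z2_def mu2_def by simp
  have nz: "\<not> (z0 = 0 \<and> z1 = 0)"
  proof
    assume "z0 = 0 \<and> z1 = 0"
    then have "mu0 v = 0" "mu1 v = 0" using l unfolding z0_def z1_def by auto
    then have "v = 0" using mu_recon[of v] by simp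
    then show False using v by simp
  qed
  have mx: "max z0 (max z1 z2) > 0"
  proof (rule ccontr)
    assume "\<not> max z0 (max z1 z2) > 0"
    then have "z0 \<le> 0" "z1 \<le> 0" "z2 \<le> 0" by auto
    moreover have "lam0 X * z0 \<le> 0" "lam1 X * z1 \<le> 0" "lam2 X * z2 \<le> 0"
      using calculation l by (simp_all add: mult_pos_neg mult_nonneg_nonpos)
    ultimately have "lam0 X * z0 = 0" "lam1 X * z1 = 0" using sum by linarith+
    then show False using nz l by simp
  qed
  have mn: "min z0 (min z1 z2) < 0"
  proof (rule ccontr)
    assume "\<not> min z0 (min z1 z2) < 0"
    then have "z0 \<ge> 0" "z1 \<ge> 0" "z2 \<ge> 0" by auto
    moreover have "lam0 X * z0 \<ge> 0" "lam1 X * z1 \<ge> 0" "lam2 X * z2 \<ge> 0"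
      using calculation l by simp_all
    ultimately have "lam0 X * z0 = 0" "lam1 X * z1 = 0" using sum by linarith+
    then show False using nz l by simp
  qed
  show "zmax X v > 0" using mx unfolding zmax_def z0_def z1_def z2_def .
  show "zmin X v < 0" using mn unfolding zmin_def z0_def z1_def z2_def .
qed

lemma hdist_formula:
  assumes X: "X \<in> open_tri P0 P1 P2" and v: "v \<noteq> 0" and h: "0 < h" "h * (- zmin X v) < 1"
  shows "hilbert_dist (open_tri P0 P1 P2) X (X + h *\<^sub>R v)
       = ln (1 + h * zmax X v) - ln (1 - h * (- zmin X v))"
proof -
  define M where "M = - zmin X v"
  define N where "N = zmax X v"
  have M: "M > 0" and N: "N > 0" using z_sign[OF X v] by (auto simp: M_def N_def)
  have ne: "X \<noteq> X + h *\<^sub>R v" using h v by simp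
  have sp: "{s. s \<ge> 0 \<and> X + s *\<^sub>R ((X + h *\<^sub>R v) - X) \<in> open_tri P0 P1 P2} = {0..<1/(h*M)}"
  proof -
    have "s \<ge> 0 \<and> X + s *\<^sub>R ((X + h *\<^sub>R v) - X) \<in> open_tri P0 P1 P2 \<longleftrightarrow> s \<in> {0..<1/(h*M)}" for s
    proof (cases "s \<ge> 0")
      case True
      have "X + s *\<^sub>R ((X + h *\<^sub>R v) - X) = X + (s*h) *\<^sub>R v" by simp
      then have "X + s *\<^sub>R ((X + h *\<^sub>R v) - X) \<in> open_tri P0 P1 P2 \<longleftrightarrow> 0 < 1 - (s*h) * M"
        using memb_plus[OF X, of "s*h" v] True h by (simp add: M_def)
      also have "\<dots> \<longleftrightarrow> s < 1/(h*M)" using h M by (simp add: field_simps)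
      finally show ?thesis using True by simp
    qed simp
    then show ?thesis by blast
  qed
  have sm: "{s. s \<ge> 0 \<and> X - s *\<^sub>R ((X + h *\<^sub>R v) - X) \<in> open_tri P0 P1 P2} = {0..<1/(h*N)}"
  proof -
    have "s \<ge> 0 \<and> X - s *\<^sub>R ((X + h *\<^sub>R v) - X) \<in> open_tri P0 P1 P2 \<longleftrightarrow> s \<in> {0..<1/(h*N)}" for s
    proof (cases "s \<ge> 0")
      case True
      have "X - s *\<^sub>R ((X + h *\<^sub>R v) - X) = X - (s*h) *\<^sub>R v" by simp
      then have "X - s *\<^sub>R ((X + h *\<^sub>R v) - X) \<in> open_tri P0 P1 P2 \<longleftrightarrow> 0 < 1 - (s*h) * N"
        using memb_minus[OF X, of "s*h" v] True h by (simp add: N_def)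
      also have "\<dots> \<longleftrightarrow> s < 1/(h*N)" using h N by (simp add: field_simps)
      finally show ?thesis using True by simp
    qed simp
    then show ?thesis by blast
  qed
  have hm: "h * M < 1" using h by (simp add: M_def)
  have Ssp: "Sup {0..<1/(h*M)} = 1/(h*M)" using h M by simp
  have Ssm: "Sup {0..<1/(h*N)} = 1/(h*N)" using h N by simp
  have crv: "cr (- (1/(h*N))) 0 1 (1/(h*M)) = (1 + h*N)/(1 - h*M)"
    unfolding cr_def using h M N hm by (simp add: field_simps)
  have pos: "(1 + h*N)/(1 - h*M) \<ge> 1" using h M N hm by (simp add: field_simps)
  have "hilbert_dist (open_tri P0 P1 P2) X (X + h *\<^sub>R v) = \<bar>ln ((1 + h*N)/(1 - h*M))\<bar>"
    unfolding hilbert_dist_def Let_def using ne by (simp only: sp sm Ssp Ssm crv if_False)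
  also have "\<dots> = ln ((1 + h*N)/(1 - h*M))" using pos by simp
  also have "\<dots> = ln (1 + h*N) - ln (1 - h*M)"
    using h M N hm by (intro ln_divide_pos) (auto simp: add_pos_pos)
  finally show ?thesis by (simp add: M_def N_def)
qed

lemma hnorm_formula:
  assumes X: "X \<in> open_tri P0 P1 P2"
  shows "hilbert_norm (open_tri P0 P1 P2) X v = zmax X v - zmin X v"
proof (cases "v = 0")
  case True
  have z: "zmax X v = 0" "zmin X v = 0"
    unfolding zmax_def zmin_def True mu2_def mu0_def mu1_def by (simp_all add: det2_def)
  have "(\<lambda>h. hilbert_dist (open_tri P0 P1 P2) X (X + h *\<^sub>R v) / h) = (\<lambda>h. 0)"
    by (rule ext) (simp add: True hilbert_dist_def)
  then have "hilbert_norm (open_tri P0 P1 P2) X v = Lim (at_right (0::real)) (\<lambda>h. 0::real)"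
    unfolding hilbert_norm_def by simp
  also have "\<dots> = 0" by (rule tendsto_Lim) auto
  finally show ?thesis using z by simp
next
  case False
  define M where "M = - zmin X v"
  define N where "N = zmax X v"
  have M: "M > 0" and N: "N > 0" using z_sign[OF X False] by (auto simp: M_def N_def)
  define \<phi> where "\<phi> h = ln (1 + h * N) - ln (1 - h * M)" for h :: real
  have d: "(\<phi> has_real_derivative (N + M)) (at 0)"
    unfolding \<phi>_def by (auto intro!: derivative_eq_intros)
  then have "(\<phi> has_real_derivative (N + M)) (at 0 within {0<..})"
    by (rule has_field_derivative_at_within)
  then have lim: "((\<lambda>h. (\<phi> h - \<phi> 0) / (h - 0)) \<longlongrightarrow> N + M) (at_right 0)"
    by (simp add: has_field_derivative_iff)
  have ev: "\<forall>\<^sub>F h in at_right 0. (\<phi> h - \<phi> 0) / (h - 0) = hilbert_dist (open_tri P0 P1 P2) X (X + h *\<^sub>R v) / h"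
  proof -
    have "1/M > 0" using M by simp
    then have "\<forall>\<^sub>F h in at_right 0. h \<in> {0<..<1/M}" by (rule eventually_at_right_real)
    then show ?thesis
    proof (rule eventually_mono)
      fix h assume "h \<in> {0<..<1/M}"
      then have h: "0 < h" "h * M < 1" using M by (auto simp: field_simps)
      show "(\<phi> h - \<phi> 0) / (h - 0) = hilbert_dist (open_tri P0 P1 P2) X (X + h *\<^sub>R v) / h"
        using hdist_formula[OF X False h(1)] h unfolding \<phi>_def M_def N_def by simp
    qed
  qed
  have "((\<lambda>h. hilbert_dist (open_tri P0 P1 P2) X (X + h *\<^sub>R v) / h) \<longlongrightarrow> N + M) (at_right 0)"
    by (rule Lim_transform_eventually[OF lim ev])
  then have "hilbert_norm (open_tri P0 P1 P2) X v = N + M"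
    unfolding hilbert_norm_def by (rule tendsto_Lim[rotated]) simp
  then show ?thesis by (simp add: M_def N_def)
qed

end



lemma conv_bound:
  fixes \<alpha> \<beta> x y :: real
  assumes "\<alpha> \<ge> 0" "\<beta> \<ge> 0" "\<alpha> + \<beta> \<le> 1" "\<bar>x\<bar> \<le> 1" "\<bar>y\<bar> \<le> 1"
  shows "\<bar>\<alpha> * x + \<beta> * y\<bar> \<le> 1"
proof -
  have "\<bar>\<alpha> * x\<bar> \<le> \<alpha>" using assms by (simp add: abs_mult mult_left_le)
  moreover have "\<bar>\<beta> * y\<bar> \<le> \<beta>" using assms by (simp add: abs_mult mult_left_le)
  ultimately show ?thesis using assms by (smt (verit))
qed

lemma hex_half:
  fixes p q p2 q2 :: real
  assumes h: "\<bar>p\<bar> \<le> 1" "\<bar>q\<bar> \<le> 1" "\<bar>p - q\<bar> \<le> 1" "\<bar>p2\<bar> \<le> 1" "\<bar>q2\<bar> \<le> 1" "\<bar>p2 - q2\<bar> \<le> 1"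
    and s: "0 \<le> q"
  shows "\<bar>p * q2 - q * p2\<bar> \<le> 1"
proof -
  have neg: "\<bar>- x\<bar> \<le> 1" if "\<bar>x\<bar> \<le> 1" for x :: real using that by simp
  have hq: "\<bar>q2 - p2\<bar> \<le> 1" using h(6) by (simp add: abs_minus_commute)
  consider "0 \<le> q" "q \<le> p" | "0 \<le> p" "p \<le> q" | "p \<le> 0" "0 \<le> q"
    using s by linarith
  then show ?thesis
  proof cases
    case 1
    have "p * q2 - q * p2 = (p - q) * q2 + q * (q2 - p2)" by (simp add: algebra_simps)
    then show ?thesis using conv_bound[of "p - q" q q2 "q2 - p2"] 1 h hq by auto
  next
    case 2
    have "p * q2 - q * p2 = p * (q2 - p2) + (q - p) * (- p2)" by (simp add: algebra_simps)
    then show ?thesis using conv_bound[of p "q - p" "q2 - p2" "- p2"] 2 h hq by (auto simp: abs_minus_commute)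
  next
    case 3
    have "p * q2 - q * p2 = q * (- p2) + (- p) * (- q2)" by (simp add: algebra_simps)
    then show ?thesis using conv_bound[of q "- p" "- p2" "- q2"] 3 h by (auto simp: abs_minus_commute)
  qed
qed

lemma hex:
  fixes p q p2 q2 :: real
  assumes h: "\<bar>p\<bar> \<le> 1" "\<bar>q\<bar> \<le> 1" "\<bar>p - q\<bar> \<le> 1" "\<bar>p2\<bar> \<le> 1" "\<bar>q2\<bar> \<le> 1" "\<bar>p2 - q2\<bar> \<le> 1"
  shows "\<bar>p * q2 - q * p2\<bar> \<le> 1"
proof (cases "0 \<le> q")
  case True then show ?thesis using hex_half[OF h] by blast
next
  case False
  have "\<bar>(-p) * q2 - (-q) * p2\<bar> \<le> 1"
    by (rule hex_half) (use h False in \<open>auto simp: abs_minus_commute\<close>)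
  then show ?thesis by (simp add: abs_minus_commute algebra_simps)
qed

lemma range3:
  fixes a b c :: real
  assumes "max a (max b c) - min a (min b c) \<le> 1"
  shows "\<bar>a - c\<bar> \<le> 1" "\<bar>b - c\<bar> \<le> 1" "\<bar>a - c - (b - c)\<bar> \<le> 1"
  using assms by (auto simp: max_def min_def abs_le_iff split: if_splits)

lemma key_identity:
  fixes l0 l1 l2 z0 z1 z2 y0 y1 y2 :: real
  assumes s: "l0 + l1 + l2 = 1" and A: "l0*z0 + l1*z1 + l2*z2 = 0" and B: "l0*y0 + l1*y1 + l2*y2 = 0"
  shows "(l0*z0) * (l1*y1) - (l1*z1) * (l0*y0) = l0*l1*l2 * ((z0 - z2)*(y1 - y2) - (z1 - z2)*(y0 - y2))"
proof -
  have A': "l2*z2 = -(l0*z0 + l1*z1)" using A by simp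
  have B': "l2*y2 = -(l0*y0 + l1*y1)" using B by simp
  have C: "l2 = 1 - l0 - l1" using s by simp
  have "l0*l1*l2 * ((z0 - z2)*(y1 - y2) - (z1 - z2)*(y0 - y2))
      = l0*l1*(l2*(z0*y1 - z1*y0) + (l2*z2)*(y0 - y1) + (l2*y2)*(z1 - z0))"
    by (simp add: algebra_simps)
  also have "\<dots> = l0*l1*(l2*(z0*y1 - z1*y0) - (l0*z0 + l1*z1)*(y0 - y1) - (l0*y0 + l1*y1)*(z1 - z0))"
    unfolding A' B' by (simp add: algebra_simps)
  also have "\<dots> = l0*l1*((l0+l1+l2)*(z0*y1 - z1*y0))"
    by (simp add: algebra_simps)
  also have "\<dots> = (l0*z0) * (l1*y1) - (l1*z1) * (l0*y0)" unfolding s by (simp add: algebra_simps)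
  finally show ?thesis by simp
qed

context tri begin

lemma det2_mu: "det2 u w = D * (mu0 u * mu1 w - mu1 u * mu0 w)"
proof -
  have "det2 u w = det2 (mu0 u *\<^sub>R e + mu1 u *\<^sub>R f) (mu0 w *\<^sub>R e + mu1 w *\<^sub>R f)"
    using mu_recon[of u] mu_recon[of w] by simp
  also have "\<dots> = mu0 u * mu1 w * D + mu1 u * mu0 w * det2 f e"
    by (simp only: det2_simps) (simp add: algebra_simps)
  also have "det2 f e = - D" by (rule det2_swap)
  finally show ?thesis by (simp add: algebra_simps)
qed

lemma det_bound:
  assumes X: "X \<in> open_tri P0 P1 P2"
    and u: "zmax X u - zmin X u \<le> 1" and w: "zmax X w - zmin X w \<le> 1"
  shows "\<bar>det2 u w\<bar> \<le> \<bar>D\<bar> * (lam0 X * lam1 X * lam2 X)"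
proof -
  define l0 l1 l2 where "l0 = lam0 X" "l1 = lam1 X" "l2 = lam2 X"
  have l: "0 < l0" "0 < l1" "0 < l2" using X open_tri_char l0_l1_l2_def by auto
  have s: "l0 + l1 + l2 = 1" by (simp add: l0_l1_l2_def lam2_def)
  define z0 z1 z2 where "z0 = mu0 u / l0" "z1 = mu1 u / l1" "z2 = mu2 u / l2"
  define y0 y1 y2 where "y0 = mu0 w / l0" "y1 = mu1 w / l1" "y2 = mu2 w / l2"
  have m: "mu0 u = l0*z0" "mu1 u = l1*z1" "mu0 w = l0*y0" "mu1 w = l1*y1"
    using l by (simp_all add: z0_z1_z2_def y0_y1_y2_def)
  have A: "l0*z0 + l1*z1 + l2*z2 = 0" using l by (simp add: z0_z1_z2_def mu2_def)
  have B: "l0*y0 + l1*y1 + l2*y2 = 0" using l by (simp add: y0_y1_y2_def mu2_def)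
  have ru: "max z0 (max z1 z2) - min z0 (min z1 z2) \<le> 1"
    using u unfolding zmax_def zmin_def z0_z1_z2_def l0_l1_l2_def .
  have rw: "max y0 (max y1 y2) - min y0 (min y1 y2) \<le> 1"
    using w unfolding zmax_def zmin_def y0_y1_y2_def l0_l1_l2_def .
  have hx: "\<bar>(z0 - z2)*(y1 - y2) - (z1 - z2)*(y0 - y2)\<bar> \<le> 1"
    by (rule hex) (use range3[OF ru] range3[OF rw] in blast)+
  have "\<bar>det2 u w\<bar> = \<bar>D\<bar> * \<bar>(l0*z0) * (l1*y1) - (l1*z1) * (l0*y0)\<bar>"
    by (subst det2_mu) (simp add: m abs_mult)
  also have "\<dots> = \<bar>D\<bar> * (l0*l1*l2 * \<bar>(z0 - z2)*(y1 - y2) - (z1 - z2)*(y0 - y2)\<bar>)"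
    unfolding key_identity[OF s A B] using l by (simp add: abs_mult)
  also have "\<dots> \<le> \<bar>D\<bar> * (l0*l1*l2 * 1)"
    using hx l by (intro mult_left_mono) auto
  finally show ?thesis by (simp add: l0_l1_l2_def)
qed

lemma density_formula:
  assumes X: "X \<in> open_tri P0 P1 P2"
  shows "hilbert_area_density (open_tri P0 P1 P2) X = 1 / (\<bar>D\<bar> * (lam0 X * lam1 X * lam2 X))"
proof -
  define l0 l1 l2 where "l0 = lam0 X" "l1 = lam1 X" "l2 = lam2 X"
  have l: "0 < l0" "0 < l1" "0 < l2" using X open_tri_char l0_l1_l2_def by auto
  have s: "l0 + l1 + l2 = 1" by (simp add: l0_l1_l2_def lam2_def)
  define S where "S = {(u, w). hilbert_norm (open_tri P0 P1 P2) X u \<le> 1 \<and> hilbert_norm (open_tri P0 P1 P2) X w \<le> 1}"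
  define g where "g uw = \<bar>fst (fst uw) * snd (snd uw) - snd (fst uw) * fst (snd uw)\<bar>" for uw :: "(real \<times> real) \<times> (real \<times> real)"
  have g: "g (u, w) = \<bar>det2 u w\<bar>" for u w by (simp add: g_def det2_def)
  define u0 where "u0 = (l0*(1-l0)) *\<^sub>R e + (- (l0*l1)) *\<^sub>R f"
  define w0 where "w0 = (- (l0*l1)) *\<^sub>R e + (l1*(1-l1)) *\<^sub>R f"
  have mu_u01: "mu0 u0 = l0*(1-l0)" "mu1 u0 = - (l0*l1)" unfolding u0_def mu_comb by simp_all
  have l2e: "l2 = 1 - l0 - l1" using s by simp
  have mu_u2: "mu2 u0 = - (l0*l2)" unfolding mu2_def mu_u01 l2e by (simp add: algebra_simps)
  note mu_u = mu_u01 mu_u2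
  have mu_w01: "mu0 w0 = - (l0*l1)" "mu1 w0 = l1*(1-l1)" unfolding w0_def mu_comb by simp_all
  have mu_w2: "mu2 w0 = - (l1*l2)" unfolding mu2_def mu_w01 l2e by (simp add: algebra_simps)
  note mu_w = mu_w01 mu_w2
  have nu: "zmax X u0 - zmin X u0 = 1"
  proof -
    have "zmax X u0 = 1 - l0" "zmin X u0 = - l0"
      unfolding zmax_def zmin_def mu_u l0_l1_l2_def[symmetric] using l s by auto
    then show ?thesis by simp
  qed
  have nw: "zmax X w0 - zmin X w0 = 1"
  proof -
    have "zmax X w0 = 1 - l1" "zmin X w0 = - l1"
      unfolding zmax_def zmin_def mu_w l0_l1_l2_def[symmetric] using l s by auto
    then show ?thesis by simp
  qed
  have inS: "(u0, w0) \<in> S" unfolding S_def using hnorm_formula[OF X] nu nw by simp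
  have dv: "\<bar>det2 u0 w0\<bar> = \<bar>D\<bar> * (l0*l1*l2)"
  proof -
    have "mu0 u0 * mu1 w0 - mu1 u0 * mu0 w0 = l0*l1*(1 - l0 - l1)"
      unfolding mu_u mu_w by (simp add: algebra_simps)
    also have "1 - l0 - l1 = l2" using s by simp
    finally have "mu0 u0 * mu1 w0 - mu1 u0 * mu0 w0 = l0*l1*l2" .
    then show ?thesis using l by (subst det2_mu) (simp add: abs_mult)
  qed
  have "(SUP uw \<in> S. g uw) = \<bar>D\<bar> * (l0*l1*l2)"
  proof (rule cSup_eq_maximum)
    have "g (u0, w0) = \<bar>D\<bar> * (l0*l1*l2)" unfolding g dv ..
    then show "\<bar>D\<bar> * (l0*l1*l2) \<in> g ` S" using inS by (metis image_eqI)
    fix x assume "x \<in> g ` S"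
    then obtain u w where uw: "(u, w) \<in> S" "x = g (u, w)" by auto
    then have "zmax X u - zmin X u \<le> 1" "zmax X w - zmin X w \<le> 1"
      unfolding S_def using hnorm_formula[OF X] by auto
    from det_bound[OF X this] show "x \<le> \<bar>D\<bar> * (l0*l1*l2)"
      using uw(2) g by (simp add: l0_l1_l2_def)
  qed
  then show ?thesis
    unfolding hilbert_area_density_def S_def[symmetric] g_def[symmetric] by (simp add: l0_l1_l2_def)
qed

end



lemma noncollinear_det:
  assumes "\<not> collinear {P0, P1, P2 :: real \<times> real}"
  shows "det2 (P0 - P2) (P1 - P2) \<noteq> 0"
proof
  assume D: "det2 (P0 - P2) (P1 - P2) = 0"
  define e where "e = P0 - P2"
  define f where "f = P1 - P2"
  have D': "fst e * snd f = snd e * fst f" using D by (simp add: det2_def e_def f_def)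
  have "e = 0 \<or> f = 0 \<or> (\<exists>c. f = c *\<^sub>R e)"
  proof (cases "e = 0")
    case False
    show ?thesis
    proof (cases "fst e = 0")
      case True
      then have se: "snd e \<noteq> 0" using False by (simp add: prod_eq_iff)
      then have "fst f = 0" using D' True by simp
      then have "f = (snd f / snd e) *\<^sub>R e" using True se by (simp add: prod_eq_iff)
      then show ?thesis by blast
    next
      case fe: False
      have "snd f = (fst f / fst e) * snd e" using D' fe by (simp add: field_simps)
      then have "f = (fst f / fst e) *\<^sub>R e" using fe by (simp add: prod_eq_iff)
      then show ?thesis by blast
    qed
  qed simp
  then have "collinear {0, e, f}" by (simp add: collinear_lemma)
  then have "collinear {P0, P2, P1}" unfolding e_def f_def by (subst collinear_3) simp
  moreover have "{P0, P2, P1} = {P0, P1, P2}" by auto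
  ultimately show False using assms by simp
qed

theorem lemma3p2:
  fixes P0 P1 P2 :: "real \<times> real" and a b c t :: real
  assumes "\<not> collinear {P0, P1, P2}"
    and "a > 0" and "b > 0" and "c > 0" and "t = a * b * c"
  shows "B_integrand t integrable_on {1<..}
    \<and> (hilbert_area_density (open_tri P0 P1 P2) has_integral B t) (ideal_tri P0 P1 P2 a b c)"
proof -
  note a = \<open>a > 0\<close> and b = \<open>b > 0\<close> and c = \<open>c > 0\<close>
  have t: "t > 0" using a b c \<open>t = a * b * c\<close> by simp
  interpret tri P0 P1 P2 by standard (rule noncollinear_det[OF assms(1)])
  have Dp: "\<bar>D\<bar> > 0" using Dne by simp
  define K where "K X = H a b c (lam0 X) (lam1 X) / \<bar>D\<bar>" for X
  have lm0[measurable]: "lam0 \<in> borel_measurable borel"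
    unfolding lam0_def det2_def using Dne[unfolded det2_def]
    by (intro borel_measurable_continuous_onI continuous_intros) auto
  have lm1[measurable]: "lam1 \<in> borel_measurable borel"
    unfolding lam1_def det2_def using Dne[unfolded det2_def]
    by (intro borel_measurable_continuous_onI continuous_intros) auto
  have Kmeas[measurable]: "K \<in> borel_measurable borel"
    unfolding K_def H_def E1_def E2_def E3_def by measurable
  have Knn: "K X \<ge> 0" for X unfolding K_def using H_nonneg Dp by simp
  have Keq: "K X = (if X \<in> ideal_tri P0 P1 P2 a b c then hilbert_area_density (open_tri P0 P1 P2) X else 0)" for X
  proof (cases "X \<in> ideal_tri P0 P1 P2 a b c")
    case True
    then have X: "X \<in> open_tri P0 P1 P2" unfolding ideal_tri_def by blast
    have cnd: "0 < lam0 X \<and> 0 < lam1 X \<and> 0 < 1 - lam0 X - lam1 X \<and> E1 a b c (lam0 X) (lam1 X) \<ge> 0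
      \<and> E2 a b c (lam0 X) (lam1 X) \<ge> 0 \<and> E3 a b c (lam0 X) (lam1 X) \<ge> 0"
      using True ideal_tri_char[OF a b c] by blast
    have "K X = 1 / (lam0 X * lam1 X * lam2 X) / \<bar>D\<bar>"
      unfolding K_def H_def lam2_def using cnd by simp
    also have "\<dots> = hilbert_area_density (open_tri P0 P1 P2) X"
      unfolding density_formula[OF X] by (simp add: field_simps)
    finally show ?thesis using True by simp
  next
    case False
    then have "\<not> (0 < lam0 X \<and> 0 < lam1 X \<and> 0 < 1 - lam0 X - lam1 X \<and> E1 a b c (lam0 X) (lam1 X) \<ge> 0
      \<and> E2 a b c (lam0 X) (lam1 X) \<ge> 0 \<and> E3 a b c (lam0 X) (lam1 X) \<ge> 0)"
      using ideal_tri_char[OF a b c] by blast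
    then have "H a b c (lam0 X) (lam1 X) = 0" unfolding H_def by (rule if_not_P)
    then have "K X = 0" unfolding K_def by simp
    then show ?thesis using False by simp
  qed
  have Hm1: "(\<lambda>x1. ennreal (H a b c x0 x1)) \<in> borel_measurable lborel" for x0
    unfolding H_def E1_def E2_def E3_def by measurable
  have "(\<integral>\<^sup>+X. ennreal (K X) \<partial>lborel)
      = ennreal \<bar>D\<bar> * (\<integral>\<^sup>+x0. (\<integral>\<^sup>+x1. ennreal (K (P2 + x0 *\<^sub>R e + x1 *\<^sub>R f)) \<partial>lborel) \<partial>lborel)"
    by (rule lin_change[OF _ Dne]) measurable
  also have "(\<lambda>x0 x1. ennreal (K (P2 + x0 *\<^sub>R e + x1 *\<^sub>R f))) = (\<lambda>x0 x1. ennreal (1/\<bar>D\<bar>) * ennreal (H a b c x0 x1))"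
    unfolding K_def lam_affine using Dp H_nonneg by (intro ext) (simp add: ennreal_mult[symmetric])
  also have "(\<integral>\<^sup>+x0. (\<integral>\<^sup>+x1. ennreal (1/\<bar>D\<bar>) * ennreal (H a b c x0 x1) \<partial>lborel) \<partial>lborel)
      = (\<integral>\<^sup>+x0. ennreal (1/\<bar>D\<bar>) * (\<integral>\<^sup>+x1. ennreal (H a b c x0 x1) \<partial>lborel) \<partial>lborel)"
    by (intro nn_integral_cong nn_integral_cmult Hm1)
  also have "\<dots> = ennreal (1/\<bar>D\<bar>) * (\<integral>\<^sup>+x0. (\<integral>\<^sup>+x1. ennreal (H a b c x0 x1) \<partial>lborel) \<partial>lborel)"
    by (rule nn_integral_cmult) measurable
  also have "ennreal \<bar>D\<bar> * (ennreal (1/\<bar>D\<bar>) * Q) = Q" for Q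
    using Dp by (simp add: mult.assoc[symmetric] ennreal_mult[symmetric])
  finally have step1: "(\<integral>\<^sup>+X. ennreal (K X) \<partial>lborel)
      = (\<integral>\<^sup>+x0. (\<integral>\<^sup>+x1. ennreal (H a b c x0 x1) \<partial>lborel) \<partial>lborel)" .
  define V where "V = (\<integral>\<^sup>+s. ennreal (B_integrand t s * indicator {1<..} s) \<partial>lborel)"
  have KV: "(\<integral>\<^sup>+X. ennreal (K X) \<partial>lborel) = V"
    unfolding step1 two_d_w[OF a b c] one_d[OF a b c] V_def \<open>t = a * b * c\<close> ..
  have "V < \<infinity>" unfolding V_def by (rule B_finite[OF t])
  then obtain r where r: "V = ennreal r" "0 \<le> r"
    by (cases V rule: ennreal_cases) auto
  have Kint: "(K has_integral r) UNIV"
    by (rule nn_integral_has_integral) (use Knn KV r in auto)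
  then have I1: "(hilbert_area_density (open_tri P0 P1 P2) has_integral r) (ideal_tri P0 P1 P2 a b c)"
    unfolding Keq has_integral_restrict_UNIV .
  have Bmeas: "(\<lambda>s. B_integrand t s * indicator {1<..} s) \<in> borel_measurable borel" by measurable
  have Bnn: "0 \<le> B_integrand t s * indicator {1<..} s" for s
    using B_integrand_nonneg[OF t] by (simp add: indicator_def)
  have hB: "((\<lambda>s. B_integrand t s * indicator {1<..} s) has_integral r) UNIV"
    by (rule nn_integral_has_integral[OF Bmeas Bnn]) (use r V_def in auto)
  have eqB: "(\<lambda>s. B_integrand t s * indicator {1<..} s) = (\<lambda>s. if s \<in> {1<..} then B_integrand t s else 0)"
    by (rule ext) (simp add: indicator_def)
  have I2: "(B_integrand t has_integral r) {1<..}"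
    using hB unfolding eqB has_integral_restrict_UNIV .
  have "B t = r" unfolding B_def using I2 by (rule integral_unique)
  then show ?thesis using I1 I2 by (auto simp: has_integral_integrable)
qed



end
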